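(* Assume (A1), (A2). For every $\varphi\in C([0,T];\mathbb{R}^n)$, $I(\varphi)=\tilde I(\varphi)$, where $$I(\varphi):=\inf_{\mathbf P\in\Xi_\varphi}\frac12\int_0^T\int_{\mathbb{R}^d\times\mathcal Y}|h|^2\,\mathbf P_t(dh\,dy)\,dt,\qquad \tilde I(\varphi):=\inf_{z\in\tilde\Xi_\varphi}\frac12\int_0^T\int_{\mathcal Y}|z_t(y)|^2\,\nu(dy)\,dt$$ (infimum over the empty set $=+\infty$), with $\Xi_\varphi$ the set of measurable $\mathbf P:[0,T]\to\mathcal P(\mathbb{R}^d\times\mathcal Y)$ such that $\mathbf P_t(A_1\times A_2)=\int_{A_2}\eta(A_1|y,t)\nu(dy)$ for a stochastic kernel $\eta$, $\int_0^T\int(|h|^2+|y|^2)\mathbf P_t(dh\,dy)dt<\infty$, and $\varphi_t=x+\int_0^t\int\Phi(\varphi_s,\mathscr L_{\bar X_s},y,\nu,h)\mathbf P_s(dh\,dy)ds$ for all $t$; and $\tilde\Xi_\varphi$ the set of measurable $z:[0,T]\times\mathcal Y\to\mathbb{R}^d$ with $\int_0^T\int_{\mathcal Y}(|z_t(y)|^2+|y|^2)\nu(dy)dt<\infty$ and $\varphi_t=x+\int_0^t\int_{\mathcal Y}\Phi(\varphi_s,\mathscr L_{\bar X_s},y,\nu,z_s(y))\nu(dy)ds$ for all $t$.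
   Context: Fix $T>0$, integers $n,m,d_1,d_2\ge1$, $d=d_1+d_2$, $\mathcal Y:=\mathbb{R}^m$, $x\in\mathbb{R}^n$. $P_1:\mathbb{R}^d\to\mathbb{R}^{d_1}$ is the coordinate projection. $\mathcal P_2(\mathbb{R}^k)$, $\mathbb W_2$ as usual. Coefficients $b:\mathbb{R}^n\times\mathcal P_2(\mathbb{R}^n)\times\mathbb{R}^m\times\mathcal P_2(\mathbb{R}^m)\to\mathbb{R}^n$, $\sigma$ with the same domain and values in $\mathbb{R}^{n\times d_1}$, $f:\mathbb{R}^m\to\mathbb{R}^m$, $g:\mathbb{R}^m\to\mathbb{R}^{m\times d_2}$. (A1): there are $C,\kappa>0$ such that $|b(x_1,\mu_1,y_1,\nu_1)-b(x_2,\mu_2,y_2,\nu_2)|+\|\sigma(x_1,\mu_1,y_1,\nu_1)-\sigma(x_2,\mu_2,y_2,\nu_2)\|\le C(|x_1-x_2|+|y_1-y_2|+\mathbb W_2(\mu_1,\mu_2)+\mathbb W_2(\nu_1,\nu_2))$, $|f(y_1)-f(y_2)|+\|g(y_1)-g(y_2)\|\le C|y_1-y_2|$, $2\langle f(y_1)-f(y_2),y_1-y_2\rangle+3\|g(y_1)-g(y_2)\|^2\le-\kappa|y_1-y_2|^2$. (A2): $g$ bounded, $c_1|\xi|^2\le\langle\sigma\sigma^*(x,\mu,y,\nu)\xi,\xi\rangle\le c_2|\xi|^2$ for some $c_1,c_2>0$. $\nu$ is the unique invariant probability measure of $dY_t=f(Y_t)dt+g(Y_t)d\tilde W_t$ ($\tilde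 W$ a $d_2$-dim Brownian motion). $\bar b(x,\mu):=\int b(x,\mu,y,\nu)\nu(dy)$; $\bar X$ solves $\dot{\bar X}_t=\bar b(\bar X_t,\mathscr L_{\bar X_t})$, $\bar X_0=x$, with $\mathscr L_{\bar X_t}=\delta_{\bar X_t}$. $\Phi(x,\mu,y,\nu',h):=\bar b(x,\mu)+\sigma(x,\mu,y,\nu')P_1h$. *)

theory Defs
  imports "HOL-Probability.Probability"
begin

definition P2 :: "('a::euclidean_space) measure \<Rightarrow> bool" where
  "P2 \<mu> \<longleftrightarrow> prob_space \<mu> \<and> sets \<mu> = sets borel \<and>
     (\<integral>\<^sup>+ x. ennreal ((norm x)\<^sup>2) \<partial>\<mu>) < \<infinity>"

definition couplings :: "('a::euclidean_space) measure \<Rightarrow> 'a measure \<Rightarrow> ('a \<times> 'a) measure set" where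
  "couplings \<mu>1 \<mu>2 = {\<pi>. prob_space \<pi> \<and> sets \<pi> = sets (borel \<Otimes>\<^sub>M borel) \<and>
      distr \<pi> borel fst = \<mu>1 \<and> distr \<pi> borel snd = \<mu>2}"

definition W2 :: "('a::euclidean_space) measure \<Rightarrow> 'a measure \<Rightarrow> real" where
  "W2 \<mu>1 \<mu>2 = sqrt (enn2real (INF \<pi>\<in>couplings \<mu>1 \<mu>2.
      \<integral>\<^sup>+ p. ennreal ((norm (fst p - snd p))\<^sup>2) \<partial>\<pi>))"

definition C2c_test :: "(real^'m \<Rightarrow> real) \<Rightarrow> (real^'m \<Rightarrow> real^'m) \<Rightarrow> (real^'m \<Rightarrow> real^'m^'m) \<Rightarrow> bool" where
  "C2c_test \<phi> D\<phi> H\<phi> \<longleftrightarrow> compact (closure {y. \<phi> y \<noteq> 0}) \<and>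
     (\<forall>y. (\<phi> has_derivative (\<lambda>v. D\<phi> y \<bullet> v)) (at y)) \<and>
     (\<forall>y. (D\<phi> has_derivative (\<lambda>v. H\<phi> y *v v)) (at y)) \<and>
     continuous_on UNIV H\<phi>"

text \<open>Generator of dY = f(Y)dt + g(Y)dW applied to a C^2 function.\<close>
definition generator :: "(real^'m \<Rightarrow> real^'m) \<Rightarrow> (real^'m \<Rightarrow> real^'d2^'m)
    \<Rightarrow> (real^'m \<Rightarrow> real^'m) \<Rightarrow> (real^'m \<Rightarrow> real^'m^'m) \<Rightarrow> real^'m \<Rightarrow> real" where
  "generator f g D\<phi> H\<phi> y = f y \<bullet> D\<phi> y +
     1/2 * (\<Sum>i\<in>UNIV. \<Sum>j\<in>UNIV. (g y ** transpose (g y)) $ i $ j * H\<phi> y $ i $ j)"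

text \<open>Invariant probability measure of the frozen SDE (infinitesimal formulation).\<close>
definition invariant_measure :: "(real^'m \<Rightarrow> real^'m) \<Rightarrow> (real^'m \<Rightarrow> real^'d2^'m)
    \<Rightarrow> (real^'m) measure \<Rightarrow> bool" where
  "invariant_measure f g \<nu> \<longleftrightarrow> prob_space \<nu> \<and> sets \<nu> = sets borel \<and>
     (\<forall>\<phi> D\<phi> H\<phi>. C2c_test \<phi> D\<phi> H\<phi> \<longrightarrow> (LINT y|\<nu>. generator f g D\<phi> H\<phi> y) = 0)"

definition bbar :: "(real^'n \<Rightarrow> (real^'n) measure \<Rightarrow> real^'m \<Rightarrow> (real^'m) measure \<Rightarrow> real^'n)
    \<Rightarrow> (real^'m) measure \<Rightarrow> real^'n \<Rightarrow> (real^'n) measure \<Rightarrow> real^'n" where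
  "bbar b \<nu> x \<mu> = (LINT y|\<nu>. b x \<mu> y \<nu>)"

text \<open>Phi(x,mu,y,nu',h) = bbar(x,mu) + sigma(x,mu,y,nu') P1 h, with R^d = R^d1 x R^d2.\<close>
definition Phi :: "(real^'n \<Rightarrow> (real^'n) measure \<Rightarrow> real^'m \<Rightarrow> (real^'m) measure \<Rightarrow> real^'n)
    \<Rightarrow> (real^'n \<Rightarrow> (real^'n) measure \<Rightarrow> real^'m \<Rightarrow> (real^'m) measure \<Rightarrow> real^'d1^'n)
    \<Rightarrow> (real^'m) measure \<Rightarrow> real^'n \<Rightarrow> (real^'n) measure \<Rightarrow> real^'m \<Rightarrow> (real^'m) measure
    \<Rightarrow> (real^'d1) \<times> (real^'d2) \<Rightarrow> real^'n" where
  "Phi b \<sigma> \<nu> x \<mu> y \<nu>' h = bbar b \<nu> x \<mu> + \<sigma> x \<mu> y \<nu>' *v fst h"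

definition stochastic_kernel :: "real \<Rightarrow> (real^'m \<Rightarrow> real \<Rightarrow> ((real^'d1) \<times> (real^'d2)) measure) \<Rightarrow> bool" where
  "stochastic_kernel T \<eta> \<longleftrightarrow>
     (\<forall>y t. prob_space (\<eta> y t) \<and> sets (\<eta> y t) = sets borel) \<and>
     (\<forall>A\<in>sets borel. (\<lambda>(y, t). emeasure (\<eta> y t) A)
        \<in> borel_measurable (borel \<Otimes>\<^sub>M restrict_space borel {0..T}))"

definition Xi :: "(real^'n \<Rightarrow> (real^'n) measure \<Rightarrow> real^'m \<Rightarrow> (real^'m) measure \<Rightarrow> real^'n)
    \<Rightarrow> (real^'n \<Rightarrow> (real^'n) measure \<Rightarrow> real^'m \<Rightarrow> (real^'m) measure \<Rightarrow> real^'d1^'n)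
    \<Rightarrow> (real^'m) measure \<Rightarrow> real^'n \<Rightarrow> (real \<Rightarrow> real^'n) \<Rightarrow> real \<Rightarrow> (real \<Rightarrow> real^'n)
    \<Rightarrow> (real \<Rightarrow> (((real^'d1) \<times> (real^'d2)) \<times> (real^'m)) measure) set" where
  "Xi b \<sigma> \<nu> x Xbar T \<phi> = {P.
     (\<forall>t\<in>{0..T}. prob_space (P t) \<and> sets (P t) = sets (borel \<Otimes>\<^sub>M borel)) \<and>
     (\<forall>A\<in>sets (borel \<Otimes>\<^sub>M borel). (\<lambda>t. emeasure (P t) A) \<in> borel_measurable (restrict_space borel {0..T})) \<and>
     (\<exists>\<eta>. stochastic_kernel T \<eta> \<and>
        (\<forall>t\<in>{0..T}. \<forall>A1\<in>sets borel. \<forall>A2\<in>sets borel.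
           emeasure (P t) (A1 \<times> A2) = (\<integral>\<^sup>+ y\<in>A2. emeasure (\<eta> y t) A1 \<partial>\<nu>))) \<and>
     (\<integral>\<^sup>+ t\<in>{0..T}. (\<integral>\<^sup>+ p. ennreal ((norm (fst p))\<^sup>2 + (norm (snd p))\<^sup>2) \<partial>P t) \<partial>lborel) < \<infinity> \<and>
     (\<forall>t\<in>{0..T}. \<phi> t = x + (LINT s:{0..t}|lborel.
         (LINT p|P s. Phi b \<sigma> \<nu> (\<phi> s) (return borel (Xbar s)) (snd p) \<nu> (fst p))))}"

definition I_rate :: "('d2::finite) itself \<Rightarrow> (real^'n \<Rightarrow> (real^'n) measure \<Rightarrow> real^'m \<Rightarrow> (real^'m) measure \<Rightarrow> real^'n)
    \<Rightarrow> (real^'n \<Rightarrow> (real^'n) measure \<Rightarrow> real^'m \<Rightarrow> (real^'m) measure \<Rightarrow> real^'d1^'n)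
    \<Rightarrow> (real^'m) measure \<Rightarrow> real^'n \<Rightarrow> (real \<Rightarrow> real^'n) \<Rightarrow> real \<Rightarrow> (real \<Rightarrow> real^'n) \<Rightarrow> ennreal" where
  "I_rate (d2T::('d2::finite) itself) b \<sigma> \<nu> x Xbar T \<phi> = Inf {ennreal (1/2) *
      (\<integral>\<^sup>+ t\<in>{0..T}. (\<integral>\<^sup>+ p. ennreal ((norm (fst p))\<^sup>2) \<partial>P t) \<partial>lborel) | P.
        P \<in> (Xi b \<sigma> \<nu> x Xbar T \<phi> :: (real \<Rightarrow> (((real^'d1) \<times> (real^'d2)) \<times> (real^'m)) measure) set)}"

definition Xi_tilde :: "(real^'n \<Rightarrow> (real^'n) measure \<Rightarrow> real^'m \<Rightarrow> (real^'m) measure \<Rightarrow> real^'n)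
    \<Rightarrow> (real^'n \<Rightarrow> (real^'n) measure \<Rightarrow> real^'m \<Rightarrow> (real^'m) measure \<Rightarrow> real^'d1^'n)
    \<Rightarrow> (real^'m) measure \<Rightarrow> real^'n \<Rightarrow> (real \<Rightarrow> real^'n) \<Rightarrow> real \<Rightarrow> (real \<Rightarrow> real^'n)
    \<Rightarrow> (real \<Rightarrow> real^'m \<Rightarrow> (real^'d1) \<times> (real^'d2)) set" where
  "Xi_tilde b \<sigma> \<nu> x Xbar T \<phi> = {z.
     (\<lambda>(t, y). z t y) \<in> borel_measurable (restrict_space borel {0..T} \<Otimes>\<^sub>M borel) \<and>
     (\<integral>\<^sup>+ t\<in>{0..T}. (\<integral>\<^sup>+ y. ennreal ((norm (z t y))\<^sup>2 + (norm y)\<^sup>2) \<partial>\<nu>) \<partial>lborel) < \<infinity> \<and>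
     (\<forall>t\<in>{0..T}. \<phi> t = x + (LINT s:{0..t}|lborel.
         (LINT y|\<nu>. Phi b \<sigma> \<nu> (\<phi> s) (return borel (Xbar s)) y \<nu> (z s y))))}"

definition I_tilde :: "('d2::finite) itself \<Rightarrow> (real^'n \<Rightarrow> (real^'n) measure \<Rightarrow> real^'m \<Rightarrow> (real^'m) measure \<Rightarrow> real^'n)
    \<Rightarrow> (real^'n \<Rightarrow> (real^'n) measure \<Rightarrow> real^'m \<Rightarrow> (real^'m) measure \<Rightarrow> real^'d1^'n)
    \<Rightarrow> (real^'m) measure \<Rightarrow> real^'n \<Rightarrow> (real \<Rightarrow> real^'n) \<Rightarrow> real \<Rightarrow> (real \<Rightarrow> real^'n) \<Rightarrow> ennreal" where
  "I_tilde (d2T::('d2::finite) itself) b \<sigma> \<nu> x Xbar T \<phi> = Inf {ennreal (1/2) *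
      (\<integral>\<^sup>+ t\<in>{0..T}. (\<integral>\<^sup>+ y. ennreal ((norm (z t y))\<^sup>2) \<partial>\<nu>) \<partial>lborel) | z.
        z \<in> (Xi_tilde b \<sigma> \<nu> x Xbar T \<phi> :: (real \<Rightarrow> real^'m \<Rightarrow> (real^'d1) \<times> (real^'d2)) set)}"

end

theory Submission
  imports Defs
begin

lemma P2_return: "P2 (return borel (a::'a::euclidean_space))"
  unfolding P2_def by (simp add: prob_space_return nn_integral_return)

lemma W2_le_coupling:
  assumes "\<pi> \<in> couplings \<mu>1 \<mu>2" "(\<integral>\<^sup>+ p. ennreal ((norm (fst p - snd p))\<^sup>2) \<partial>\<pi>) \<le> ennreal r" "0 \<le> r"
  shows "W2 \<mu>1 \<mu>2 \<le> sqrt r"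
proof -
  have "(INF \<pi>\<in>couplings \<mu>1 \<mu>2. \<integral>\<^sup>+ p. ennreal ((norm (fst p - snd p))\<^sup>2) \<partial>\<pi>) \<le> ennreal r"
    using assms by (meson INF_lower2)
  then have "enn2real (INF \<pi>\<in>couplings \<mu>1 \<mu>2. \<integral>\<^sup>+ p. ennreal ((norm (fst p - snd p))\<^sup>2) \<partial>\<pi>) \<le> r"
    using assms(3) by (metis enn2real_ennreal enn2real_mono ennreal_less_top)
  then show ?thesis unfolding W2_def by simp
qed

lemma W2_return: "W2 (return borel (a::'a::euclidean_space)) (return borel b) \<le> norm (a - b)"
proof -
  have "return (borel \<Otimes>\<^sub>M borel) (a, b) \<in> couplings (return borel a) (return borel b)"
    unfolding couplings_def by (auto simp: prob_space_return distr_return[OF measurable_fst] distr_return[OF measurable_snd] space_pair_measure)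
  moreover have "(\<integral>\<^sup>+ p. ennreal ((norm (fst p - snd p))\<^sup>2) \<partial>return (borel \<Otimes>\<^sub>M borel) (a, b)) \<le> ennreal ((norm (a - b))\<^sup>2)"
    by (subst nn_integral_return) (auto simp: space_pair_measure)
  ultimately have "W2 (return borel a) (return borel b) \<le> sqrt ((norm (a - b))\<^sup>2)"
    by (rule W2_le_coupling) simp
  then show ?thesis by simp
qed

lemma W2_self: assumes "P2 (\<mu>::'a::euclidean_space measure)" shows "W2 \<mu> \<mu> = 0"
proof -
  interpret prob_space \<mu> using assms unfolding P2_def by auto
  have s: "sets \<mu> = sets borel" using assms unfolding P2_def by auto
  have m: "(\<lambda>x. (x, x)) \<in> measurable \<mu> (borel \<Otimes>\<^sub>M borel)"
    using s by (simp add: measurable_Pair cong: measurable_cong_sets)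
  have "distr \<mu> (borel \<Otimes>\<^sub>M borel) (\<lambda>x. (x, x)) \<in> couplings \<mu> \<mu>"
    unfolding couplings_def using m s
    by (auto simp: prob_space_distr distr_distr comp_def distr_id2)
  moreover have "(\<integral>\<^sup>+ p. ennreal ((norm (fst p - snd p))\<^sup>2) \<partial>distr \<mu> (borel \<Otimes>\<^sub>M borel) (\<lambda>x. (x, x))) \<le> ennreal 0"
  proof -
    have fm: "(\<lambda>p::'a\<times>'a. ennreal ((norm (fst p - snd p))\<^sup>2)) \<in> borel_measurable (borel \<Otimes>\<^sub>M borel)"
      by measurable
    have fm': "(\<lambda>p::'a\<times>'a. ennreal ((norm (fst p - snd p))\<^sup>2)) \<in> borel_measurable (distr \<mu> (borel \<Otimes>\<^sub>M borel) (\<lambda>x. (x, x)))"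
      using fm by (simp cong: measurable_cong_sets)
    show ?thesis by (simp add: nn_integral_distr[OF m fm'])
  qed
  ultimately have "W2 \<mu> \<mu> \<le> sqrt 0" by (rule W2_le_coupling) simp
  moreover have "W2 \<mu> \<mu> \<ge> 0" unfolding W2_def by simp
  ultimately show ?thesis by simp
qed

lemma lip_cont:
  fixes \<Psi> :: "real^'n \<Rightarrow> (real^'n) measure \<Rightarrow> real^'m \<Rightarrow> (real^'m) measure \<Rightarrow> 'v::real_normed_vector"
  assumes C: "\<And>x1 x2 \<mu>1 \<mu>2 y1 y2. P2 \<mu>1 \<Longrightarrow> P2 \<mu>2 \<Longrightarrow>
      norm (\<Psi> x1 \<mu>1 y1 \<nu> - \<Psi> x2 \<mu>2 y2 \<nu>) \<le> C * (norm (x1-x2) + norm (y1-y2) + W2 \<mu>1 \<mu>2 + W2 \<nu> \<nu>)"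
  and \<nu>: "P2 \<nu>" and C0: "C \<ge> 0"
  and u: "continuous_on UNIV u" and v: "continuous_on UNIV v"
  shows "continuous_on UNIV (\<lambda>q::real \<times> (real^'m). \<Psi> (u (fst q)) (return borel (v (fst q))) (snd q) \<nu>)"
proof -
  let ?f = "\<lambda>q::real \<times> (real^'m). \<Psi> (u (fst q)) (return borel (v (fst q))) (snd q) \<nu>"
  have "isCont ?f q0" for q0
  proof -
    let ?g = "\<lambda>q::real \<times> (real^'m). C * (norm (u (fst q) - u (fst q0)) + norm (snd q - snd q0) + norm (v (fst q) - v (fst q0)))"
    have bd: "norm (?f q - ?f q0) \<le> ?g q" for q
    proof -
      have "norm (?f q - ?f q0) \<le> C * (norm (u (fst q) - u (fst q0)) + norm (snd q - snd q0)
         + W2 (return borel (v (fst q))) (return borel (v (fst q0))) + W2 \<nu> \<nu>)"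
        by (rule C) (simp_all add: P2_return)
      also have "\<dots> \<le> ?g q"
        using W2_return[of "v (fst q)" "v (fst q0)"] W2_self[OF \<nu>] C0
        by (intro mult_left_mono) (auto simp del: norm_minus_cancel)
      finally show ?thesis .
    qed
    have cu: "isCont u x" "isCont v x" for x using u v by (auto simp: continuous_on_eq_continuous_at)
    have cu': "continuous_on UNIV (\<lambda>q::real \<times> (real^'m). u (fst q))"
      using continuous_on_compose[OF continuous_on_fst[OF continuous_on_id], of UNIV u] u by (simp add: comp_def)
    have cv': "continuous_on UNIV (\<lambda>q::real \<times> (real^'m). v (fst q))"
      using continuous_on_compose[OF continuous_on_fst[OF continuous_on_id], of UNIV v] v by (simp add: comp_def)
    have "continuous_on UNIV ?g"
      by (intro continuous_intros cu' cv')
    then have "continuous (at q0) ?g" using continuous_on_eq_continuous_at open_UNIV by blast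
    then have "(?g \<longlongrightarrow> ?g q0) (at q0)" by (simp add: isCont_def)
    then have g0: "(?g \<longlongrightarrow> 0) (at q0)" by simp
    have "((\<lambda>q. ?f q - ?f q0) \<longlongrightarrow> 0) (at q0)"
      by (rule Lim_null_comparison[OF always_eventually g0]) (use bd in blast)
    then show ?thesis unfolding isCont_def by (simp add: LIM_zero_iff)
  qed
  then show ?thesis by (simp add: continuous_on_eq_continuous_at)
qed


lemma mat_bound:
  fixes A :: "real^'d^'n"
  assumes H: "\<And>\<xi>. ((A ** transpose A) *v \<xi>) \<bullet> \<xi> \<le> c2 * (norm \<xi>)\<^sup>2" and c2: "0 \<le> c2"
  shows "norm (A *v v) \<le> sqrt c2 * norm v"
proof -
  define \<xi> where "\<xi> = A *v v"
  have n1: "(norm \<xi>)\<^sup>2 = (transpose A *v \<xi>) \<bullet> v"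
  proof -
    have "(norm \<xi>)\<^sup>2 = (A *v v) \<bullet> \<xi>" by (simp add: \<xi>_def power2_norm_eq_inner)
    also have "\<dots> = (v v* transpose A) \<bullet> \<xi>" by simp
    also have "\<dots> = v \<bullet> (transpose A *v \<xi>)" by (rule dot_lmul_matrix)
    finally show ?thesis by (simp add: inner_commute)
  qed
  have n2: "(norm (transpose A *v \<xi>))\<^sup>2 \<le> c2 * (norm \<xi>)\<^sup>2"
  proof -
    have "(norm (transpose A *v \<xi>))\<^sup>2 = (\<xi> v* A) \<bullet> (transpose A *v \<xi>)"
      by (simp add: power2_norm_eq_inner)
    also have "\<dots> = \<xi> \<bullet> (A *v (transpose A *v \<xi>))" by (rule dot_lmul_matrix)
    also have "\<dots> = ((A ** transpose A) *v \<xi>) \<bullet> \<xi>" by (subst matrix_vector_mul_assoc) (rule inner_commute)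
    finally show ?thesis using H by simp
  qed
  then have n3: "norm (transpose A *v \<xi>) \<le> sqrt c2 * norm \<xi>"
    using c2 by (metis norm_ge_zero real_le_rsqrt real_sqrt_mult real_sqrt_abs abs_norm_cancel power2_eq_square
        real_sqrt_mult_self)
  have "(norm \<xi>)\<^sup>2 \<le> norm (transpose A *v \<xi>) * norm v"
    using n1 norm_cauchy_schwarz by metis
  also have "\<dots> \<le> sqrt c2 * norm \<xi> * norm v" using n3 by (simp add: mult_right_mono)
  finally have "norm \<xi> * norm \<xi> \<le> norm \<xi> * (sqrt c2 * norm v)" by (simp add: power2_eq_square ac_simps)
  then have "norm \<xi> \<le> sqrt c2 * norm v"
    by (cases "norm \<xi> = 0") (auto simp: mult_le_cancel_left c2)
  then show ?thesis by (simp add: \<xi>_def)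
qed

lemma jensen_norm:
  fixes f :: "'a \<Rightarrow> 'b::euclidean_space"
  assumes "prob_space M"
  shows "ennreal ((norm (integral\<^sup>L M f))\<^sup>2) \<le> (\<integral>\<^sup>+x. ennreal ((norm (f x))\<^sup>2) \<partial>M)"
proof (cases "integrable M f \<and> (\<integral>\<^sup>+x. ennreal ((norm (f x))\<^sup>2) \<partial>M) < \<infinity>")
  case False
  show ?thesis
  proof (cases "integrable M f")
    case False then show ?thesis by (simp add: not_integrable_integral_eq)
  next
    case True
    with \<open>\<not> (integrable M f \<and> _)\<close> have "\<not> (\<integral>\<^sup>+x. ennreal ((norm (f x))\<^sup>2) \<partial>M) < \<infinity>" by blast
    then have "(\<integral>\<^sup>+x. ennreal ((norm (f x))\<^sup>2) \<partial>M) = \<top>" by (metis infinity_ennreal_def less_top)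
    then show ?thesis by simp
  qed
next
  case True
  interpret prob_space M by fact
  have fm: "f \<in> borel_measurable M" using True by (simp add: borel_measurable_integrable)
  have i1: "integrable M (\<lambda>x. norm (f x))" using True by (simp add: integrable_norm)
  have i2: "integrable M (\<lambda>x. (norm (f x))\<^sup>2)"
  proof (rule integrableI_bounded)
    show "(\<lambda>x. (norm (f x))\<^sup>2) \<in> borel_measurable M" using fm by measurable
    show "(\<integral>\<^sup>+x. ennreal (norm ((norm (f x))\<^sup>2)) \<partial>M) < \<infinity>" using True by simp
  qed
  have "(norm (integral\<^sup>L M f))\<^sup>2 \<le> (integral\<^sup>L M (\<lambda>x. norm (f x)))\<^sup>2"
    by (intro power_mono integral_norm_bound) auto
  also have "\<dots> \<le> integral\<^sup>L M (\<lambda>x. (norm (f x))\<^sup>2)"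
    using variance_eq[OF i1 i2] variance_positive[of "\<lambda>x. norm (f x)"] by simp
  finally have "ennreal ((norm (integral\<^sup>L M f))\<^sup>2) \<le> ennreal (integral\<^sup>L M (\<lambda>x. (norm (f x))\<^sup>2))"
    by (rule ennreal_leI)
  also have "\<dots> = (\<integral>\<^sup>+x. ennreal ((norm (f x))\<^sup>2) \<partial>M)"
    using i2 by (subst nn_integral_eq_integral) simp_all
  finally show ?thesis .
qed


lemma ennreal_abs_split: "ennreal \<bar>r::real\<bar> = ennreal r + ennreal (- r)"
  by (cases "r \<ge> 0") (auto simp: ennreal_neg)

lemma integral_bind_real:
  fixes f :: "'b \<Rightarrow> real"
  assumes N: "N \<in> measurable M (subprob_algebra K)" and f[measurable]: "f \<in> borel_measurable K"
    and ne: "space M \<noteq> {}" and int: "integrable (M \<bind> N) f"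
  shows "integral\<^sup>L (M \<bind> N) f = (\<integral>y. integral\<^sup>L (N y) f \<partial>M)"
proof -
  have sb: "sets (M \<bind> N) = sets K" by (rule sets_bind[OF subprob_measurableD(2)[OF N] ne])
  define gp where "gp y = (\<integral>\<^sup>+x. ennreal (f x) \<partial>N y)" for y
  define gn where "gn y = (\<integral>\<^sup>+x. ennreal (- f x) \<partial>N y)" for y
  have gpm[measurable]: "gp \<in> borel_measurable M"
    unfolding gp_def by (rule measurable_compose[OF N nn_integral_measurable_subprob_algebra]) simp
  have gnm[measurable]: "gn \<in> borel_measurable M"
    unfolding gn_def by (rule measurable_compose[OF N nn_integral_measurable_subprob_algebra]) simp
  have bp: "(\<integral>\<^sup>+x. ennreal (f x) \<partial>(M \<bind> N)) = (\<integral>\<^sup>+y. gp y \<partial>M)"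
    unfolding gp_def by (rule nn_integral_bind[OF _ N]) simp
  have bn: "(\<integral>\<^sup>+x. ennreal (- f x) \<partial>(M \<bind> N)) = (\<integral>\<^sup>+y. gn y \<partial>M)"
    unfolding gn_def by (rule nn_integral_bind[OF _ N]) simp
  have fin: "(\<integral>\<^sup>+x. ennreal (norm (f x)) \<partial>(M \<bind> N)) < \<infinity>"
    using int by (simp add: integrable_iff_bounded)
  have "(\<integral>\<^sup>+x. ennreal (f x) \<partial>(M \<bind> N)) \<le> (\<integral>\<^sup>+x. ennreal (norm (f x)) \<partial>(M \<bind> N))"
    by (intro nn_integral_mono) auto
  with fin bp have finp: "(\<integral>\<^sup>+y. gp y \<partial>M) < \<infinity>" by simp
  have "(\<integral>\<^sup>+x. ennreal (- f x) \<partial>(M \<bind> N)) \<le> (\<integral>\<^sup>+x. ennreal (norm (f x)) \<partial>(M \<bind> N))"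
    by (intro nn_integral_mono) auto
  with fin bn have finn: "(\<integral>\<^sup>+y. gn y \<partial>M) < \<infinity>" by simp
  have aep: "AE y in M. gp y \<noteq> \<infinity>" using finp by (intro nn_integral_PInf_AE) auto
  have aen: "AE y in M. gn y \<noteq> \<infinity>" using finn by (intro nn_integral_PInf_AE) auto
  have ip: "integrable M (\<lambda>y. enn2real (gp y))"
  proof (rule integrableI_bounded)
    have "(\<integral>\<^sup>+y. ennreal (norm (enn2real (gp y))) \<partial>M) = (\<integral>\<^sup>+y. gp y \<partial>M)"
      using aep by (intro nn_integral_cong_AE) (auto simp: ennreal_enn2real_if)
    then show "(\<integral>\<^sup>+y. ennreal (norm (enn2real (gp y))) \<partial>M) < \<infinity>" using finp by simp
  qed simp
  have iN: "integrable M (\<lambda>y. enn2real (gn y))"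
  proof (rule integrableI_bounded)
    have "(\<integral>\<^sup>+y. ennreal (norm (enn2real (gn y))) \<partial>M) = (\<integral>\<^sup>+y. gn y \<partial>M)"
      using aen by (intro nn_integral_cong_AE) (auto simp: ennreal_enn2real_if)
    then show "(\<integral>\<^sup>+y. ennreal (norm (enn2real (gn y))) \<partial>M) < \<infinity>" using finn by simp
  qed simp
  have ep: "enn2real (\<integral>\<^sup>+y. gp y \<partial>M) = (\<integral>y. enn2real (gp y) \<partial>M)"
    using aep by (intro enn2real_nn_integral_eq_integral) (auto simp: ennreal_enn2real_if)
  have en: "enn2real (\<integral>\<^sup>+y. gn y \<partial>M) = (\<integral>y. enn2real (gn y) \<partial>M)"
    using aen by (intro enn2real_nn_integral_eq_integral) (auto simp: ennreal_enn2real_if)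
  have ae: "AE y in M. integral\<^sup>L (N y) f = enn2real (gp y) - enn2real (gn y)"
    using aep aen AE_space
  proof eventually_elim
    case (elim y)
    show ?case
    proof -
      have True: "y \<in> space M" using elim by simp
      have sNy: "sets (N y) = sets K" using subprob_measurableD(2)[OF N True] .
      have fm: "f \<in> borel_measurable (N y)" using sNy by (simp cong: measurable_cong_sets)
      have "(\<integral>\<^sup>+x. ennreal (norm (f x)) \<partial>N y) = gp y + gn y"
        unfolding gp_def gn_def using fm
        by (subst nn_integral_add[symmetric]) (auto simp: ennreal_abs_split)
      then have "integrable (N y) f" using elim fm by (simp add: integrable_iff_bounded less_top)
      then show ?thesis unfolding gp_def gn_def by (rule real_lebesgue_integral_def)
    qed
  qed
  have "integral\<^sup>L (M \<bind> N) f = enn2real (\<integral>\<^sup>+y. gp y \<partial>M) - enn2real (\<integral>\<^sup>+y. gn y \<partial>M)"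
    using real_lebesgue_integral_def[OF int] bp bn by simp
  also have "\<dots> = (\<integral>y. enn2real (gp y) - enn2real (gn y) \<partial>M)"
    using ep en ip iN by simp
  also have "\<dots> = (\<integral>y. integral\<^sup>L (N y) f \<partial>M)"
    by (rule integral_cong_AE[OF _ _ ae[THEN AE_mp, OF AE_I2], symmetric])
       (auto intro: measurable_compose[OF N integral_measurable_subprob_algebra])
  finally show ?thesis .
qed

lemma integral_bind_vec:
  fixes f :: "'b \<Rightarrow> real^'n"
  assumes N: "N \<in> measurable M (subprob_algebra K)" and f[measurable]: "f \<in> borel_measurable K"
    and ne: "space M \<noteq> {}" and int: "integrable (M \<bind> N) f"
  shows "integral\<^sup>L (M \<bind> N) f = (\<integral>y. integral\<^sup>L (N y) f \<partial>M)"
proof -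
  define g where "g y = (\<integral>\<^sup>+x. ennreal (norm (f x)) \<partial>N y)" for y
  have gm[measurable]: "g \<in> borel_measurable M"
    unfolding g_def by (rule measurable_compose[OF N nn_integral_measurable_subprob_algebra]) simp
  have fin: "(\<integral>\<^sup>+x. ennreal (norm (f x)) \<partial>(M \<bind> N)) < \<infinity>"
    using int by (simp add: integrable_iff_bounded)
  also have "(\<integral>\<^sup>+x. ennreal (norm (f x)) \<partial>(M \<bind> N)) = (\<integral>\<^sup>+y. g y \<partial>M)"
    unfolding g_def by (rule nn_integral_bind[OF _ N]) simp
  finally have fing: "(\<integral>\<^sup>+y. g y \<partial>M) < \<infinity>" .
  have aeg: "AE y in M. g y \<noteq> \<infinity>" using fing by (intro nn_integral_PInf_AE) auto
  have aei: "AE y in M. integrable (N y) f"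
    using aeg AE_space
  proof eventually_elim
    case (elim y)
    then have sNy: "sets (N y) = sets K" using subprob_measurableD(2)[OF N] by simp
    have fm: "f \<in> borel_measurable (N y)" using sNy by (simp cong: measurable_cong_sets)
    then show ?case using elim by (simp add: integrable_iff_bounded less_top g_def)
  qed
  have imeas: "(\<lambda>y. integral\<^sup>L (N y) h) \<in> borel_measurable M" if "h \<in> borel_measurable K"
    for h :: "'b \<Rightarrow> 'z::{banach, second_countable_topology}"
    by (rule measurable_compose[OF N integral_measurable_subprob_algebra[OF that]])
  have intM: "integrable M (\<lambda>y. integral\<^sup>L (N y) f)"
  proof (rule integrableI_bounded)
    have "(\<integral>\<^sup>+y. ennreal (norm (integral\<^sup>L (N y) f)) \<partial>M) \<le> (\<integral>\<^sup>+y. g y \<partial>M)"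
    proof (intro nn_integral_mono)
      fix y show "ennreal (norm (integral\<^sup>L (N y) f)) \<le> g y"
        unfolding g_def
        by (cases "integrable (N y) f") (auto simp: integral_norm_bound_ennreal not_integrable_integral_eq)
    qed
    then show "(\<integral>\<^sup>+y. ennreal (norm (integral\<^sup>L (N y) f)) \<partial>M) < \<infinity>" using fing by simp
  qed (rule imeas[OF f])
  show ?thesis
  proof (subst vec_eq_iff, intro allI)
    fix i
    have "integral\<^sup>L (M \<bind> N) f $ i = integral\<^sup>L (M \<bind> N) (\<lambda>x. f x $ i)"
      by (rule integral_bounded_linear[OF bounded_linear_vec_nth int, symmetric])
    also have "\<dots> = (\<integral>y. integral\<^sup>L (N y) (\<lambda>x. f x $ i) \<partial>M)"
      by (rule integral_bind_real[OF N _ ne integrable_bounded_linear[OF bounded_linear_vec_nth int]])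
         (rule measurable_compose[OF f borel_measurable_continuous_onI], intro continuous_intros)
    also have "\<dots> = (\<integral>y. integral\<^sup>L (N y) f $ i \<partial>M)"
    proof (rule integral_cong_AE)
      show "(\<lambda>y. integral\<^sup>L (N y) (\<lambda>x. f x $ i)) \<in> borel_measurable M"
        by (rule imeas, rule measurable_compose[OF f borel_measurable_continuous_onI], intro continuous_intros)
      show "(\<lambda>y. integral\<^sup>L (N y) f $ i) \<in> borel_measurable M"
        by (rule measurable_compose[OF imeas[OF f] borel_measurable_continuous_onI], intro continuous_intros)
      show "AE y in M. integral\<^sup>L (N y) (\<lambda>x. f x $ i) = integral\<^sup>L (N y) f $ i"
        using aei by eventually_elim (rule integral_bounded_linear[OF bounded_linear_vec_nth])
    qed
    also have "\<dots> = (\<integral>y. integral\<^sup>L (N y) f \<partial>M) $ i"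
      by (rule integral_bounded_linear[OF bounded_linear_vec_nth intM])
    finally show "integral\<^sup>L (M \<bind> N) f $ i = (\<integral>y. integral\<^sup>L (N y) f \<partial>M) $ i" .
  qed
qed


lemma cont_mvmult: "continuous_on UNIV (\<lambda>q::(real^'a^'b) \<times> (real^'a). fst q *v snd q)"
  unfolding matrix_vector_mult_def
  by (intro continuous_intros)

locale setting =
  fixes T :: real and b :: "real^'n \<Rightarrow> (real^'n) measure \<Rightarrow> real^'m \<Rightarrow> (real^'m) measure \<Rightarrow> real^'n"
    and \<sigma> :: "real^'n \<Rightarrow> (real^'n) measure \<Rightarrow> real^'m \<Rightarrow> (real^'m) measure \<Rightarrow> real^'d1^'n"
    and \<nu> :: "(real^'m) measure" and Xbar :: "real \<Rightarrow> real^'n" and \<phi> :: "real \<Rightarrow> real^'n"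
    and C c2 :: real
  assumes T: "T > 0" and C: "C > 0" and c2: "c2 > 0"
  and lipb: "\<And>x1 x2 \<mu>1 \<mu>2 y1 y2. P2 \<mu>1 \<Longrightarrow> P2 \<mu>2 \<Longrightarrow>
      norm (b x1 \<mu>1 y1 \<nu> - b x2 \<mu>2 y2 \<nu>) \<le> C * (norm (x1-x2) + norm (y1-y2) + W2 \<mu>1 \<mu>2 + W2 \<nu> \<nu>)"
  and lips: "\<And>x1 x2 \<mu>1 \<mu>2 y1 y2. P2 \<mu>1 \<Longrightarrow> P2 \<mu>2 \<Longrightarrow>
      norm (\<sigma> x1 \<mu>1 y1 \<nu> - \<sigma> x2 \<mu>2 y2 \<nu>) \<le> C * (norm (x1-x2) + norm (y1-y2) + W2 \<mu>1 \<mu>2 + W2 \<nu> \<nu>)"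
  and sbd: "\<And>x \<mu> y \<xi>. P2 \<mu> \<Longrightarrow> ((\<sigma> x \<mu> y \<nu> ** transpose (\<sigma> x \<mu> y \<nu>)) *v \<xi>) \<bullet> \<xi> \<le> c2 * (norm \<xi>)\<^sup>2"
  and nu: "P2 \<nu>"
  and Xc: "continuous_on {0..T} Xbar" and \<phi>c: "continuous_on {0..T} \<phi>"
begin

definition "cl s = max 0 (min T s)"
definition "\<phi>' s = \<phi> (cl s)"
definition "X' s = Xbar (cl s)"
definition "Bf s y = b (\<phi>' s) (return borel (X' s)) y \<nu>"
definition "Gf s y = \<sigma> (\<phi>' s) (return borel (X' s)) y \<nu>"
definition "Bb s = (LINT y|\<nu>. Bf s y)"
definition "\<Psi> s y (h :: (real^'d1) \<times> (real^'d2)) = Bb s + Gf s y *v fst h"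

lemma nu_prob: "prob_space \<nu>" and nu_sets: "sets \<nu> = sets borel"
  using nu unfolding P2_def by auto

lemma cl_K: "cl s \<in> {0..T}" using T by (auto simp: cl_def)
lemma cl_id: "s \<in> {0..T} \<Longrightarrow> cl s = s" by (auto simp: cl_def)

lemma cont_cl: "continuous_on UNIV cl" unfolding cl_def by (intro continuous_intros)

lemma clr: "cl ` UNIV \<subseteq> {0..T}" using cl_K by auto
lemma cont_\<phi>': "continuous_on UNIV \<phi>'"
  unfolding \<phi>'_def using continuous_on_compose[OF cont_cl continuous_on_subset[OF \<phi>c clr]]
  by (simp add: comp_def)
lemma cont_X': "continuous_on UNIV X'"
  unfolding X'_def using continuous_on_compose[OF cont_cl continuous_on_subset[OF Xc clr]]
  by (simp add: comp_def)

lemma cont_Bf: "continuous_on UNIV (\<lambda>q. Bf (fst q) (snd q))"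
  unfolding Bf_def using lip_cont[where \<Psi>=b and C=C and \<nu>=\<nu> and u=\<phi>' and v=X', OF lipb nu less_imp_le[OF C] cont_\<phi>' cont_X'] by simp
lemma cont_Gf: "continuous_on UNIV (\<lambda>q. Gf (fst q) (snd q))"
  unfolding Gf_def using lip_cont[where \<Psi>=\<sigma> and C=C and \<nu>=\<nu> and u=\<phi>' and v=X', OF lips nu less_imp_le[OF C] cont_\<phi>' cont_X'] by simp

lemma Gf_bound: "norm (Gf s y *v v) \<le> sqrt c2 * norm v"
  unfolding Gf_def by (rule mat_bound[OF sbd[OF P2_return]]) (use c2 in auto)

lemma Phi_eq: "s \<in> {0..T} \<Longrightarrow> Phi b \<sigma> \<nu> (\<phi> s) (return borel (Xbar s)) y \<nu> h = \<Psi> s y h"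
  by (simp add: Phi_def bbar_def \<Psi>_def Bb_def Bf_def Gf_def \<phi>'_def X'_def cl_id)

lemma Bf_meas: "(\<lambda>q. Bf (fst q) (snd q)) \<in> borel_measurable (borel \<Otimes>\<^sub>M borel)"
  unfolding borel_prod by (rule borel_measurable_continuous_onI[OF cont_Bf])
lemma Gf_meas: "(\<lambda>q. Gf (fst q) (snd q)) \<in> borel_measurable (borel \<Otimes>\<^sub>M borel)"
  unfolding borel_prod by (rule borel_measurable_continuous_onI[OF cont_Gf])

lemma Bb_meas: "Bb \<in> borel_measurable borel"
proof -
  interpret prob_space \<nu> by (rule nu_prob)
  have "(\<lambda>q. Bf (fst q) (snd q)) \<in> borel_measurable (borel \<Otimes>\<^sub>M \<nu>)"
    using Bf_meas by (simp add: nu_sets cong: measurable_cong_sets)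
  then have "case_prod Bf \<in> borel_measurable (borel \<Otimes>\<^sub>M \<nu>)" by (simp add: case_prod_beta')
  then show ?thesis unfolding Bb_def by (rule borel_measurable_lebesgue_integral)
qed

lemma Psi_meas: "(\<lambda>q. \<Psi> (fst q) (fst (snd q)) (snd (snd q) :: (real^'d1) \<times> (real^'d2)))
    \<in> borel_measurable (borel \<Otimes>\<^sub>M (borel \<Otimes>\<^sub>M borel))"
proof -
  have g: "(\<lambda>q::real \<times> (real^'m) \<times> ((real^'d1) \<times> (real^'d2)). Gf (fst q) (fst (snd q))) \<in> borel_measurable (borel \<Otimes>\<^sub>M (borel \<Otimes>\<^sub>M borel))"
  proof -
    have "(\<lambda>q::real \<times> (real^'m) \<times> ((real^'d1) \<times> (real^'d2)). (fst q, fst (snd q))) \<in> measurable (borel \<Otimes>\<^sub>M (borel \<Otimes>\<^sub>M borel)) (borel \<Otimes>\<^sub>M borel)"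
      by measurable
    from measurable_compose[OF this Gf_meas] show ?thesis by simp
  qed
  have h: "(\<lambda>q::real \<times> (real^'m) \<times> ((real^'d1) \<times> (real^'d2)). fst (snd (snd q))) \<in> borel_measurable (borel \<Otimes>\<^sub>M (borel \<Otimes>\<^sub>M borel))"
    by (rule measurable_compose[OF measurable_compose[OF measurable_snd measurable_snd] borel_measurable_continuous_onI[OF continuous_on_fst[OF continuous_on_id]]])
  have "(\<lambda>q::real \<times> (real^'m) \<times> ((real^'d1) \<times> (real^'d2)). Gf (fst q) (fst (snd q)) *v fst (snd (snd q))) \<in> borel_measurable (borel \<Otimes>\<^sub>M (borel \<Otimes>\<^sub>M borel))"
    using borel_measurable_continuous_Pair[OF g h cont_mvmult] .
  moreover have "(\<lambda>q::real \<times> (real^'m) \<times> ((real^'d1) \<times> (real^'d2)). Bb (fst q)) \<in> borel_measurable (borel \<Otimes>\<^sub>M (borel \<Otimes>\<^sub>M borel))"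
    by (rule measurable_compose[OF measurable_fst Bb_meas])
  ultimately show ?thesis unfolding \<Psi>_def by (intro borel_measurable_add)
qed

end


context setting begin

abbreviation "K \<equiv> {0..T::real}"

lemma zm_K:
  assumes zm: "(\<lambda>(t, y). z t y) \<in> borel_measurable (restrict_space borel K \<Otimes>\<^sub>M borel)"
  shows "(\<lambda>q. z (fst q) (snd q)) \<in> borel_measurable (restrict_space borel K \<Otimes>\<^sub>M \<nu>)"
    and "t \<in> K \<Longrightarrow> z t \<in> borel_measurable borel"
    and "t \<in> K \<Longrightarrow> z t \<in> borel_measurable \<nu>"
proof -
  have zm0: "(\<lambda>q. z (fst q) (snd q)) \<in> borel_measurable (restrict_space borel K \<Otimes>\<^sub>M borel)"
    using zm by (simp add: case_prod_beta')
  then show "(\<lambda>q. z (fst q) (snd q)) \<in> borel_measurable (restrict_space borel K \<Otimes>\<^sub>M \<nu>)"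
    using nu_sets by (simp cong: measurable_cong_sets)
  assume t: "t \<in> K"
  have "Pair t \<in> measurable borel (restrict_space borel K \<Otimes>\<^sub>M borel)"
    by (rule measurable_Pair1') (use t in \<open>simp add: space_restrict_space\<close>)
  from measurable_compose[OF this zm0] show zt: "z t \<in> borel_measurable borel" by simp
  then show "z t \<in> borel_measurable \<nu>" using nu_sets by (simp cong: measurable_cong_sets)
qed

lemma Phi_meas_p:
  assumes s: "s \<in> K"
  shows "(\<lambda>p::((real^'d1) \<times> (real^'d2)) \<times> (real^'m). Phi b \<sigma> \<nu> (\<phi> s) (return borel (Xbar s)) (snd p) \<nu> (fst p))
     \<in> borel_measurable (borel \<Otimes>\<^sub>M borel)"
proof -
  have "(\<lambda>p::((real^'d1) \<times> (real^'d2)) \<times> (real^'m). (s, snd p, fst p)) \<in> measurable (borel \<Otimes>\<^sub>M borel) (borel \<Otimes>\<^sub>M (borel \<Otimes>\<^sub>M borel))"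
    by measurable
  from measurable_compose[OF this Psi_meas]
  have "(\<lambda>p::((real^'d1) \<times> (real^'d2)) \<times> (real^'m). \<Psi> s (snd p) (fst p)) \<in> borel_measurable (borel \<Otimes>\<^sub>M borel)" by simp
  then show ?thesis unfolding Phi_eq[OF s] .
qed

lemma zP:
  fixes x :: "real^'n" and z :: "real \<Rightarrow> real^'m \<Rightarrow> (real^'d1) \<times> (real^'d2)"
  assumes z: "z \<in> Xi_tilde b \<sigma> \<nu> x Xbar T \<phi>"
  shows "\<exists>P \<in> (Xi b \<sigma> \<nu> x Xbar T \<phi> :: (real \<Rightarrow> (((real^'d1) \<times> (real^'d2)) \<times> (real^'m)) measure) set).
     (\<integral>\<^sup>+ t\<in>{0..T}. (\<integral>\<^sup>+ p. ennreal ((norm (fst p))\<^sup>2) \<partial>P t) \<partial>lborel)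
      = (\<integral>\<^sup>+ t\<in>{0..T}. (\<integral>\<^sup>+ y. ennreal ((norm (z t y))\<^sup>2) \<partial>\<nu>) \<partial>lborel)"
proof -
  interpret nu: prob_space \<nu> by (rule nu_prob)
  have zm: "(\<lambda>(t, y). z t y) \<in> borel_measurable (restrict_space borel K \<Otimes>\<^sub>M borel)"
    and zfin: "(\<integral>\<^sup>+ t\<in>{0..T}. (\<integral>\<^sup>+ y. ennreal ((norm (z t y))\<^sup>2 + (norm y)\<^sup>2) \<partial>\<nu>) \<partial>lborel) < \<infinity>"
    and zode: "\<forall>t\<in>{0..T}. \<phi> t = x + (LINT s:{0..t}|lborel.
         (LINT y|\<nu>. Phi b \<sigma> \<nu> (\<phi> s) (return borel (Xbar s)) y \<nu> (z s y)))"
    using z unfolding Xi_tilde_def by auto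
  note zms = zm_K[OF zm]
  have pm: "(\<lambda>y. (z t y, y)) \<in> measurable \<nu> (borel \<Otimes>\<^sub>M borel)" if t: "t \<in> K" for t
    using zms(3)[OF t] by (intro measurable_Pair) (simp_all add: nu_sets cong: measurable_cong_sets)
  define P where "P t = distr \<nu> (borel \<Otimes>\<^sub>M borel) (\<lambda>y. (z t y, y))" for t
  define \<eta> where "\<eta> y t = return (borel :: ((real^'d1) \<times> (real^'d2)) measure) (z t y)" for y t
  have nnP: "(\<integral>\<^sup>+p. g p \<partial>P t) = (\<integral>\<^sup>+y. g (z t y, y) \<partial>\<nu>)"
    if t: "t \<in> K" and g: "g \<in> borel_measurable (borel \<Otimes>\<^sub>M borel)" for t g
    unfolding P_def by (rule nn_integral_distr[OF pm[OF t]]) (use g in \<open>simp cong: measurable_cong_sets\<close>)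
  have emP: "emeasure (P t) A = (\<integral>\<^sup>+y. indicator A (z t y, y) \<partial>\<nu>)"
    if t: "t \<in> K" and A: "A \<in> sets (borel \<Otimes>\<^sub>M borel)" for t A
  proof -
    have "emeasure (P t) A = (\<integral>\<^sup>+p. indicator A p \<partial>P t)"
      using A by (simp add: P_def)
    also have "\<dots> = (\<integral>\<^sup>+y. indicator A (z t y, y) \<partial>\<nu>)"
      using A by (intro nnP[OF t]) simp
    finally show ?thesis .
  qed
  have zpair: "(\<lambda>q. (z (fst q) (snd q), snd q)) \<in> measurable (restrict_space borel K \<Otimes>\<^sub>M \<nu>) (borel \<Otimes>\<^sub>M borel)"
    using zms(1) by (intro measurable_Pair) (simp_all add: nu_sets cong: measurable_cong_sets)
  have PXi: "P \<in> Xi b \<sigma> \<nu> x Xbar T \<phi>"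
    unfolding Xi_def
  proof (intro CollectI conjI ballI)
    fix t assume t: "t \<in> K"
    show "prob_space (P t)" unfolding P_def by (rule nu.prob_space_distr[OF pm[OF t]])
    show "sets (P t) = sets (borel \<Otimes>\<^sub>M borel)" unfolding P_def by simp
  next
    fix A :: "(((real^'d1) \<times> (real^'d2)) \<times> (real^'m)) set" assume A: "A \<in> sets (borel \<Otimes>\<^sub>M borel)"
    have "(\<lambda>q. indicator A (z (fst q) (snd q), snd q) :: ennreal) \<in> borel_measurable (restrict_space borel K \<Otimes>\<^sub>M \<nu>)"
      by (rule measurable_compose[OF zpair borel_measurable_indicator[OF A]])
    then have "(\<lambda>t. \<integral>\<^sup>+y. indicator A (z t y, y) \<partial>\<nu>) \<in> borel_measurable (restrict_space borel K)"
      by (intro nu.borel_measurable_nn_integral) (simp add: case_prod_beta')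
    then show "(\<lambda>t. emeasure (P t) A) \<in> borel_measurable (restrict_space borel K)"
      by (rule measurable_cong[THEN iffD1, rotated]) (simp add: emP[OF _ A] space_restrict_space)
  next
    show "\<exists>\<eta>. stochastic_kernel T \<eta> \<and> (\<forall>t\<in>{0..T}. \<forall>A1\<in>sets borel. \<forall>A2\<in>sets borel.
           emeasure (P t) (A1 \<times> A2) = (\<integral>\<^sup>+ y\<in>A2. emeasure (\<eta> y t) A1 \<partial>\<nu>))"
    proof (intro exI conjI ballI)
      show "stochastic_kernel T \<eta>"
        unfolding stochastic_kernel_def
      proof (intro conjI allI ballI)
        fix y t show "prob_space (\<eta> y t)" unfolding \<eta>_def by (rule prob_space_return) simp
        show "sets (\<eta> y t) = sets borel" unfolding \<eta>_def by simp
      next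
        fix A :: "((real^'d1) \<times> (real^'d2)) set" assume A: "A \<in> sets borel"
        have zsw: "(\<lambda>q. z (snd q) (fst q)) \<in> borel_measurable (borel \<Otimes>\<^sub>M restrict_space borel K)"
        proof -
          have "(\<lambda>q. z (fst q) (snd q)) \<in> borel_measurable (restrict_space borel K \<Otimes>\<^sub>M borel)"
            using zm by (simp add: case_prod_beta')
          from measurable_compose[OF measurable_Pair[OF measurable_snd measurable_fst] this]
          show ?thesis by simp
        qed
        have "(\<lambda>q. indicator A (z (snd q) (fst q)) :: ennreal) \<in> borel_measurable (borel \<Otimes>\<^sub>M restrict_space borel K)"
          by (rule measurable_compose[OF zsw borel_measurable_indicator[OF A]])
        then show "(\<lambda>(y, t). emeasure (\<eta> y t) A) \<in> borel_measurable (borel \<Otimes>\<^sub>M restrict_space borel K)"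
          using A by (simp add: \<eta>_def case_prod_beta')
      qed
    next
      fix t A1 A2 assume t: "t \<in> K" and A1: "A1 \<in> sets (borel :: ((real^'d1) \<times> (real^'d2)) measure)"
        and A2: "A2 \<in> sets (borel :: (real^'m) measure)"
      have "emeasure (P t) (A1 \<times> A2) = (\<integral>\<^sup>+y. indicator (A1 \<times> A2) (z t y, y) \<partial>\<nu>)"
        using A1 A2 by (intro emP[OF t]) simp
      also have "\<dots> = (\<integral>\<^sup>+ y\<in>A2. emeasure (\<eta> y t) A1 \<partial>\<nu>)"
        using A1 by (intro nn_integral_cong) (simp add: \<eta>_def indicator_times)
      finally show "emeasure (P t) (A1 \<times> A2) = (\<integral>\<^sup>+ y\<in>A2. emeasure (\<eta> y t) A1 \<partial>\<nu>)" .
    qed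
  next
    have "(\<integral>\<^sup>+ t\<in>{0..T}. (\<integral>\<^sup>+ p. ennreal ((norm (fst p))\<^sup>2 + (norm (snd p))\<^sup>2) \<partial>P t) \<partial>lborel)
       = (\<integral>\<^sup>+ t\<in>{0..T}. (\<integral>\<^sup>+ y. ennreal ((norm (z t y))\<^sup>2 + (norm y)\<^sup>2) \<partial>\<nu>) \<partial>lborel)"
    proof (intro nn_integral_cong)
      fix t :: real
      show "(\<integral>\<^sup>+ p. ennreal ((norm (fst p))\<^sup>2 + (norm (snd p))\<^sup>2) \<partial>P t) * indicator K t
         = (\<integral>\<^sup>+ y. ennreal ((norm (z t y))\<^sup>2 + (norm y)\<^sup>2) \<partial>\<nu>) * indicator K t"
      proof (cases "t \<in> K")
        case True
        have "(\<lambda>p::((real^'d1) \<times> (real^'d2)) \<times> (real^'m). ennreal ((norm (fst p))\<^sup>2 + (norm (snd p))\<^sup>2)) \<in> borel_measurable (borel \<Otimes>\<^sub>M borel)"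
          by measurable
        from nnP[OF True this] show ?thesis by simp
      qed simp
    qed
    then show "(\<integral>\<^sup>+ t\<in>{0..T}. (\<integral>\<^sup>+ p. ennreal ((norm (fst p))\<^sup>2 + (norm (snd p))\<^sup>2) \<partial>P t) \<partial>lborel) < \<infinity>"
      using zfin by simp
  next
    fix t assume t: "t \<in> K"
    have "(LINT s:{0..t}|lborel. (LINT p|P s. Phi b \<sigma> \<nu> (\<phi> s) (return borel (Xbar s)) (snd p) \<nu> (fst p)))
        = (LINT s:{0..t}|lborel. (LINT y|\<nu>. Phi b \<sigma> \<nu> (\<phi> s) (return borel (Xbar s)) y \<nu> (z s y)))"
    proof (rule set_lebesgue_integral_cong)
      show "{0..t} \<in> sets lborel" by simp
      show "\<forall>s. s \<in> {0..t} \<longrightarrow> (LINT p|P s. Phi b \<sigma> \<nu> (\<phi> s) (return borel (Xbar s)) (snd p) \<nu> (fst p))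
          = (LINT y|\<nu>. Phi b \<sigma> \<nu> (\<phi> s) (return borel (Xbar s)) y \<nu> (z s y))"
      proof (intro allI impI)
        fix s assume "s \<in> {0..t}"
        then have s: "s \<in> K" using t by auto
        show "(LINT p|P s. Phi b \<sigma> \<nu> (\<phi> s) (return borel (Xbar s)) (snd p) \<nu> (fst p))
          = (LINT y|\<nu>. Phi b \<sigma> \<nu> (\<phi> s) (return borel (Xbar s)) y \<nu> (z s y))"
          unfolding P_def by (subst integral_distr[OF pm[OF s] Phi_meas_p[OF s]]) simp
      qed
    qed
    then show "\<phi> t = x + (LINT s:{0..t}|lborel.
         (LINT p|P s. Phi b \<sigma> \<nu> (\<phi> s) (return borel (Xbar s)) (snd p) \<nu> (fst p)))"
      using zode t by simp
  qed
  have "(\<integral>\<^sup>+ t\<in>{0..T}. (\<integral>\<^sup>+ p. ennreal ((norm (fst p))\<^sup>2) \<partial>P t) \<partial>lborel)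
      = (\<integral>\<^sup>+ t\<in>{0..T}. (\<integral>\<^sup>+ y. ennreal ((norm (z t y))\<^sup>2) \<partial>\<nu>) \<partial>lborel)"
  proof (intro nn_integral_cong)
    fix t :: real
    show "(\<integral>\<^sup>+ p. ennreal ((norm (fst p))\<^sup>2) \<partial>P t) * indicator K t
       = (\<integral>\<^sup>+ y. ennreal ((norm (z t y))\<^sup>2) \<partial>\<nu>) * indicator K t"
    proof (cases "t \<in> K")
      case True
      have "(\<lambda>p::((real^'d1) \<times> (real^'d2)) \<times> (real^'m). ennreal ((norm (fst p))\<^sup>2)) \<in> borel_measurable (borel \<Otimes>\<^sub>M borel)"
        by measurable
      from nnP[OF True this] show ?thesis by simp
    qed simp
  qed
  with PXi show ?thesis by blast
qed

end


locale withP = setting T b \<sigma> \<nu> Xbar \<phi> C c2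
  for T :: real and b :: "real^'n \<Rightarrow> (real^'n) measure \<Rightarrow> real^'m \<Rightarrow> (real^'m) measure \<Rightarrow> real^'n"
    and \<sigma> :: "real^'n \<Rightarrow> (real^'n) measure \<Rightarrow> real^'m \<Rightarrow> (real^'m) measure \<Rightarrow> real^'d1^'n"
    and \<nu> :: "(real^'m) measure" and Xbar :: "real \<Rightarrow> real^'n" and \<phi> :: "real \<Rightarrow> real^'n"
    and C c2 :: real +
  fixes P :: "real \<Rightarrow> (((real^'d1) \<times> (real^'d2)) \<times> (real^'m)) measure"
    and \<eta> :: "real^'m \<Rightarrow> real \<Rightarrow> ((real^'d1) \<times> (real^'d2)) measure"
  assumes Pps: "\<And>t. t \<in> {0..T} \<Longrightarrow> prob_space (P t)"
    and Psets: "\<And>t. t \<in> {0..T} \<Longrightarrow> sets (P t) = sets (borel \<Otimes>\<^sub>M borel)"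
    and Pm: "\<And>A. A \<in> sets (borel \<Otimes>\<^sub>M borel) \<Longrightarrow> (\<lambda>t. emeasure (P t) A) \<in> borel_measurable (restrict_space borel {0..T})"
    and \<eta>ps: "\<And>y t. prob_space (\<eta> y t)" and \<eta>sets: "\<And>y t. sets (\<eta> y t) = sets borel"
    and \<eta>m: "\<And>A. A \<in> sets borel \<Longrightarrow> (\<lambda>(y, t). emeasure (\<eta> y t) A) \<in> borel_measurable (borel \<Otimes>\<^sub>M restrict_space borel {0..T})"
    and rect: "\<And>t A1 A2. t \<in> {0..T} \<Longrightarrow> A1 \<in> sets borel \<Longrightarrow> A2 \<in> sets borel \<Longrightarrow>
           emeasure (P t) (A1 \<times> A2) = (\<integral>\<^sup>+ y\<in>A2. emeasure (\<eta> y t) A1 \<partial>\<nu>)"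
begin

lemma \<kappa>: "(\<lambda>q. \<eta> (snd q) (fst q)) \<in> measurable (restrict_space borel K \<Otimes>\<^sub>M borel) (subprob_algebra borel)"
proof (rule measurable_subprob_algebra)
  fix a show "subprob_space (\<eta> (snd a) (fst a))" using \<eta>ps by (simp add: prob_space_imp_subprob_space)
  show "sets (\<eta> (snd a) (fst a)) = sets borel" by (rule \<eta>sets)
next
  fix A :: "((real^'d1) \<times> (real^'d2)) set" assume A: "A \<in> sets borel"
  have "(\<lambda>q. emeasure (\<eta> (fst q) (snd q)) A) \<in> borel_measurable (borel \<Otimes>\<^sub>M restrict_space borel K)"
    using \<eta>m[OF A] by (simp add: case_prod_beta')
  from measurable_compose[OF measurable_Pair[OF measurable_snd measurable_fst] this]
  show "(\<lambda>q. emeasure (\<eta> (snd q) (fst q)) A) \<in> borel_measurable (restrict_space borel K \<Otimes>\<^sub>M borel)" by simp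
qed

lemma \<eta>t: assumes t: "t \<in> K"
  shows "(\<lambda>y. \<eta> y t) \<in> measurable borel (subprob_algebra borel)"
    and "(\<lambda>y. \<eta> y t) \<in> measurable \<nu> (subprob_algebra borel)"
proof -
  have "Pair t \<in> measurable borel (restrict_space borel K \<Otimes>\<^sub>M borel)"
    by (rule measurable_Pair1') (use t in \<open>simp add: space_restrict_space\<close>)
  from measurable_compose[OF this \<kappa>] show "(\<lambda>y. \<eta> y t) \<in> measurable borel (subprob_algebra borel)" by simp
  then show "(\<lambda>y. \<eta> y t) \<in> measurable \<nu> (subprob_algebra borel)" using nu_sets by (simp cong: measurable_cong_sets)
qed

definition "zz t y = (LINT h|\<eta> y t. h)"

lemma zz_meas: "(\<lambda>(t, y). zz t y) \<in> borel_measurable (restrict_space borel K \<Otimes>\<^sub>M borel)"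
proof -
  have "(\<lambda>M. integral\<^sup>L M (\<lambda>h::(real^'d1) \<times> (real^'d2). h)) \<in> borel_measurable (subprob_algebra borel)"
    by (rule integral_measurable_subprob_algebra[OF borel_measurable_continuous_onI[OF continuous_on_id]])
  from measurable_compose[OF \<kappa> this] show ?thesis by (simp add: zz_def case_prod_beta')
qed

definition "NN t y = distr (\<eta> y t) (borel \<Otimes>\<^sub>M borel) (\<lambda>h. (h, y))"

lemma pairh: "(\<lambda>h. (h, y)) \<in> measurable (\<eta> y t) (borel \<Otimes>\<^sub>M borel)"
  using \<eta>sets by (simp cong: measurable_cong_sets)

lemma NN_meas: assumes t: "t \<in> K" shows "NN t \<in> measurable \<nu> (subprob_algebra (borel \<Otimes>\<^sub>M borel))"
proof -
  have nb: "(\<lambda>y. y) \<in> measurable \<nu> borel" by (rule measurable_ident_sets[OF nu_sets])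
  have "(\<lambda>q::(real^'m) \<times> ((real^'d1) \<times> (real^'d2)). (snd q, fst q)) \<in> measurable (\<nu> \<Otimes>\<^sub>M borel) (borel \<Otimes>\<^sub>M borel)"
    by (rule measurable_Pair[OF measurable_snd measurable_compose[OF measurable_fst nb]])
  then have "(\<lambda>(y::real^'m, h::(real^'d1) \<times> (real^'d2)). (h, y)) \<in> measurable (\<nu> \<Otimes>\<^sub>M borel) (borel \<Otimes>\<^sub>M borel)"
    by (simp add: case_prod_beta')
  from measurable_distr2[OF this \<eta>t(2)[OF t]] show ?thesis unfolding NN_def[abs_def] by simp
qed

lemma nu_ne: "space \<nu> \<noteq> {}"
  using prob_space.not_empty[OF nu_prob] .

lemma Pbind: assumes t: "t \<in> K" shows "P t = \<nu> \<bind> NN t"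
proof (rule measure_eqI_generator_eq[where \<Omega>=UNIV and E="{a \<times> b | a b. a \<in> sets borel \<and> b \<in> sets borel}" and A="\<lambda>_. UNIV"])
  show "Int_stable {a \<times> b | a b. a \<in> sets (borel::((real^'d1) \<times> (real^'d2)) measure) \<and> b \<in> sets (borel :: (real^'m) measure)}"
    by (rule Int_stable_pair_measure_generator)
  show "{a \<times> b | a b. a \<in> sets (borel::((real^'d1) \<times> (real^'d2)) measure) \<and> b \<in> sets (borel :: (real^'m) measure)} \<subseteq> Pow UNIV" by simp
  have sp: "sets (borel \<Otimes>\<^sub>M borel) = sigma_sets UNIV {a \<times> b | a b. a \<in> sets (borel::((real^'d1) \<times> (real^'d2)) measure) \<and> b \<in> sets (borel :: (real^'m) measure)}"
    by (simp add: sets_pair_measure)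
  show "sets (P t) = sigma_sets UNIV {a \<times> b | a b. a \<in> sets (borel::((real^'d1) \<times> (real^'d2)) measure) \<and> b \<in> sets (borel :: (real^'m) measure)}"
    using Psets[OF t] sp by simp
  have sb: "sets (\<nu> \<bind> NN t) = sets (borel \<Otimes>\<^sub>M borel)"
    by (rule sets_bind[OF _ nu_ne]) (simp add: NN_def)
  show "sets (\<nu> \<bind> NN t) = sigma_sets UNIV {a \<times> b | a b. a \<in> sets (borel::((real^'d1) \<times> (real^'d2)) measure) \<and> b \<in> sets (borel :: (real^'m) measure)}"
    using sb sp by simp
  show "range (\<lambda>_. UNIV) \<subseteq> {a \<times> b | a b. a \<in> sets (borel::((real^'d1) \<times> (real^'d2)) measure) \<and> b \<in> sets (borel :: (real^'m) measure)}"
    by (auto intro!: exI[of _ UNIV])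
  show "(\<Union>i::nat. UNIV) = UNIV" by simp
  show "emeasure (P t) UNIV \<noteq> \<infinity>" for i :: nat
    using prob_space.emeasure_space_1[OF Pps[OF t]] sets_eq_imp_space_eq[OF Psets[OF t]]
    by (simp add: space_pair_measure)
next
  fix X assume "X \<in> {a \<times> b | a b. a \<in> sets (borel::((real^'d1) \<times> (real^'d2)) measure) \<and> b \<in> sets (borel :: (real^'m) measure)}"
  then obtain A1 A2 where X: "X = A1 \<times> A2" and A1: "A1 \<in> sets borel" and A2: "A2 \<in> sets borel" by auto
  have "emeasure (\<nu> \<bind> NN t) X = (\<integral>\<^sup>+y. emeasure (NN t y) X \<partial>\<nu>)"
    using X A1 A2 by (intro emeasure_bind[OF nu_ne NN_meas[OF t]]) simp
  also have "\<dots> = (\<integral>\<^sup>+ y\<in>A2. emeasure (\<eta> y t) A1 \<partial>\<nu>)"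
  proof (intro nn_integral_cong)
    fix y
    have "emeasure (NN t y) X = emeasure (\<eta> y t) ((\<lambda>h. (h, y)) -` X \<inter> space (\<eta> y t))"
      unfolding NN_def using X A1 A2 by (intro emeasure_distr[OF pairh]) simp
    also have "\<dots> = emeasure (\<eta> y t) A1 * indicator A2 y"
      using sets_eq_imp_space_eq[OF \<eta>sets] X by (cases "y \<in> A2") auto
    finally show "emeasure (NN t y) X = emeasure (\<eta> y t) A1 * indicator A2 y" .
  qed
  also have "\<dots> = emeasure (P t) X" using rect[OF t A1 A2] X by simp
  finally show "emeasure (P t) X = emeasure (\<nu> \<bind> NN t) X" by simp
qed

lemma nnP: assumes t: "t \<in> K" and g: "g \<in> borel_measurable (borel \<Otimes>\<^sub>M borel)"
  shows "(\<integral>\<^sup>+p. g p \<partial>P t) = (\<integral>\<^sup>+y. (\<integral>\<^sup>+h. g (h, y) \<partial>\<eta> y t) \<partial>\<nu>)"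
proof -
  have "(\<integral>\<^sup>+p. g p \<partial>P t) = (\<integral>\<^sup>+y. (\<integral>\<^sup>+p. g p \<partial>NN t y) \<partial>\<nu>)"
    unfolding Pbind[OF t] by (rule nn_integral_bind[OF g NN_meas[OF t]])
  also have "\<dots> = (\<integral>\<^sup>+y. (\<integral>\<^sup>+h. g (h, y) \<partial>\<eta> y t) \<partial>\<nu>)"
    unfolding NN_def
    by (intro nn_integral_cong nn_integral_distr[OF pairh]) (use g in \<open>simp cong: measurable_cong_sets\<close>)
  finally show ?thesis .
qed

end


lemma le_one_plus_sq: "(a::real) \<le> 1 + a\<^sup>2"
proof -
  have "0 \<le> (a - 1)\<^sup>2" by simp
  then have "0 \<le> a\<^sup>2 - 2 * a + 1" by (simp add: power2_diff)
  moreover have "0 \<le> a\<^sup>2" by simp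
  ultimately show ?thesis by linarith
qed

context withP begin

lemma cost_le:
  "(\<integral>\<^sup>+ t\<in>K. (\<integral>\<^sup>+ y. ennreal ((norm (zz t y))\<^sup>2) \<partial>\<nu>) \<partial>lborel)
     \<le> (\<integral>\<^sup>+ t\<in>K. (\<integral>\<^sup>+ p. ennreal ((norm (fst p))\<^sup>2) \<partial>P t) \<partial>lborel)"
proof (intro nn_integral_mono)
  fix t :: real
  show "(\<integral>\<^sup>+ y. ennreal ((norm (zz t y))\<^sup>2) \<partial>\<nu>) * indicator K t \<le> (\<integral>\<^sup>+ p. ennreal ((norm (fst p))\<^sup>2) \<partial>P t) * indicator K t"
  proof (cases "t \<in> K")
    case True
    have g: "(\<lambda>p::((real^'d1) \<times> (real^'d2)) \<times> (real^'m). ennreal ((norm (fst p))\<^sup>2)) \<in> borel_measurable (borel \<Otimes>\<^sub>M borel)"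
      by measurable
    have "(\<integral>\<^sup>+ y. ennreal ((norm (zz t y))\<^sup>2) \<partial>\<nu>) \<le> (\<integral>\<^sup>+y. (\<integral>\<^sup>+h. ennreal ((norm h)\<^sup>2) \<partial>\<eta> y t) \<partial>\<nu>)"
      unfolding zz_def by (intro nn_integral_mono jensen_norm \<eta>ps)
    also have "\<dots> = (\<integral>\<^sup>+ p. ennreal ((norm (fst p))\<^sup>2) \<partial>P t)"
      using nnP[OF True g] by simp
    finally have fin: "(\<integral>\<^sup>+ y. ennreal ((norm (zz t y))\<^sup>2) \<partial>\<nu>) \<le> (\<integral>\<^sup>+ p. ennreal ((norm (fst p))\<^sup>2) \<partial>P t)" .
    have i1: "indicator K t = (1::ennreal)" by (rule indicator_simps(1)[OF True])
    show ?thesis unfolding i1 using fin by (simp only: mult_1_right)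
  next
    case False
    have i0: "indicator K t = (0::ennreal)" by (rule indicator_simps(2)[OF False])
    show ?thesis unfolding i0 by (simp only: mult_zero_right order_refl)
  qed
qed

lemma moment_le:
  "(\<integral>\<^sup>+ t\<in>K. (\<integral>\<^sup>+ y. ennreal ((norm (zz t y))\<^sup>2 + (norm y)\<^sup>2) \<partial>\<nu>) \<partial>lborel)
     \<le> (\<integral>\<^sup>+ t\<in>K. (\<integral>\<^sup>+ p. ennreal ((norm (fst p))\<^sup>2 + (norm (snd p))\<^sup>2) \<partial>P t) \<partial>lborel)"
proof (intro nn_integral_mono)
  fix t :: real
  show "(\<integral>\<^sup>+ y. ennreal ((norm (zz t y))\<^sup>2 + (norm y)\<^sup>2) \<partial>\<nu>) * indicator K t
     \<le> (\<integral>\<^sup>+ p. ennreal ((norm (fst p))\<^sup>2 + (norm (snd p))\<^sup>2) \<partial>P t) * indicator K t"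
  proof (cases "t \<in> K")
    case True
    have g: "(\<lambda>p::((real^'d1) \<times> (real^'d2)) \<times> (real^'m). ennreal ((norm (fst p))\<^sup>2 + (norm (snd p))\<^sup>2)) \<in> borel_measurable (borel \<Otimes>\<^sub>M borel)"
      by measurable
    have pt: "ennreal ((norm (zz t y))\<^sup>2 + (norm y)\<^sup>2) \<le> (\<integral>\<^sup>+h. ennreal ((norm h)\<^sup>2 + (norm y)\<^sup>2) \<partial>\<eta> y t)" for y
    proof -
      interpret e: prob_space "\<eta> y t" by (rule \<eta>ps)
      have "ennreal ((norm (zz t y))\<^sup>2 + (norm y)\<^sup>2) = ennreal ((norm (zz t y))\<^sup>2) + ennreal ((norm y)\<^sup>2)"
        by (simp add: ennreal_plus)
      also have "\<dots> \<le> (\<integral>\<^sup>+h. ennreal ((norm h)\<^sup>2) \<partial>\<eta> y t) + ennreal ((norm y)\<^sup>2)"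
        unfolding zz_def by (intro add_right_mono jensen_norm \<eta>ps)
      also have "\<dots> = (\<integral>\<^sup>+h. ennreal ((norm h)\<^sup>2) + ennreal ((norm y)\<^sup>2) \<partial>\<eta> y t)"
        using \<eta>sets by (subst nn_integral_add) (simp_all add: e.emeasure_space_1 cong: measurable_cong_sets)
      also have "\<dots> = (\<integral>\<^sup>+h. ennreal ((norm h)\<^sup>2 + (norm y)\<^sup>2) \<partial>\<eta> y t)"
        by (simp add: ennreal_plus)
      finally show ?thesis .
    qed
    have "(\<integral>\<^sup>+ y. ennreal ((norm (zz t y))\<^sup>2 + (norm y)\<^sup>2) \<partial>\<nu>) \<le> (\<integral>\<^sup>+y. (\<integral>\<^sup>+h. ennreal ((norm h)\<^sup>2 + (norm y)\<^sup>2) \<partial>\<eta> y t) \<partial>\<nu>)"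
      by (intro nn_integral_mono pt)
    also have "\<dots> = (\<integral>\<^sup>+ p. ennreal ((norm (fst p))\<^sup>2 + (norm (snd p))\<^sup>2) \<partial>P t)"
      using nnP[OF True g] by simp
    finally have fin: "(\<integral>\<^sup>+ y. ennreal ((norm (zz t y))\<^sup>2 + (norm y)\<^sup>2) \<partial>\<nu>) \<le> (\<integral>\<^sup>+ p. ennreal ((norm (fst p))\<^sup>2 + (norm (snd p))\<^sup>2) \<partial>P t)" .
    have i1: "indicator K t = (1::ennreal)" by (rule indicator_simps(1)[OF True])
    show ?thesis unfolding i1 using fin by (simp only: mult_1_right)
  next
    case False
    have i0: "indicator K t = (0::ennreal)" by (rule indicator_simps(2)[OF False])
    show ?thesis unfolding i0 by (simp only: mult_zero_right order_refl)
  qed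
qed

end


context withP begin

lemma Psi_meas_s: "s \<in> K \<Longrightarrow> (\<lambda>p::((real^'d1) \<times> (real^'d2)) \<times> (real^'m). \<Psi> s (snd p) (fst p)) \<in> borel_measurable (borel \<Otimes>\<^sub>M borel)"
proof -
  have "(\<lambda>p::((real^'d1) \<times> (real^'d2)) \<times> (real^'m). (s, snd p, fst p)) \<in> measurable (borel \<Otimes>\<^sub>M borel) (borel \<Otimes>\<^sub>M (borel \<Otimes>\<^sub>M borel))"
    by measurable
  from measurable_compose[OF this Psi_meas] show ?thesis by simp
qed

lemma bl_G: "bounded_linear (\<lambda>h::(real^'d1) \<times> (real^'d2). A *v fst h)" for A :: "real^'d1^'n"
proof -
  have "bounded_linear (\<lambda>v::real^'d1. A *v v)"
    using linear_conv_bounded_linear matrix_vector_mul_linear by blast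
  from bounded_linear_compose[OF this bounded_linear_fst] show ?thesis .
qed

lemma key_pt:
  assumes s: "s \<in> K" and G: "(\<integral>\<^sup>+p. ennreal ((norm (fst p))\<^sup>2 + (norm (snd p))\<^sup>2) \<partial>P s) < \<infinity>"
  shows "(LINT p|P s. Phi b \<sigma> \<nu> (\<phi> s) (return borel (Xbar s)) (snd p) \<nu> (fst p))
       = (LINT y|\<nu>. Phi b \<sigma> \<nu> (\<phi> s) (return borel (Xbar s)) y \<nu> (zz s y))"
proof -
  interpret nu: prob_space \<nu> by (rule nu_prob)
  interpret Ps: prob_space "P s" by (rule Pps[OF s])
  let ?F = "\<lambda>p::((real^'d1) \<times> (real^'d2)) \<times> (real^'m). \<Psi> s (snd p) (fst p)"
  have Fm: "?F \<in> borel_measurable (borel \<Otimes>\<^sub>M borel)" by (rule Psi_meas_s[OF s])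
  have FmP: "?F \<in> borel_measurable (P s)" using Fm Psets[OF s] by (simp cong: measurable_cong_sets)
  have um: "(\<lambda>p::((real^'d1) \<times> (real^'d2)) \<times> (real^'m). ennreal ((norm (fst p))\<^sup>2 + (norm (snd p))\<^sup>2)) \<in> borel_measurable (P s)"
    using Psets[OF s] by (simp cong: measurable_cong_sets)
  define A where "A = norm (Bb s) + sqrt c2"
  have A0: "0 \<le> A" unfolding A_def using c2 by (intro add_nonneg_nonneg) auto
  have bnd: "norm (?F p) \<le> A + sqrt c2 * ((norm (fst p))\<^sup>2 + (norm (snd p))\<^sup>2)" for p
  proof -
    have "norm (?F p) \<le> norm (Bb s) + norm (Gf s (snd p) *v fst (fst p))"
      unfolding \<Psi>_def by (rule norm_triangle_ineq)
    also have "\<dots> \<le> norm (Bb s) + sqrt c2 * norm (fst (fst p))"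
      using Gf_bound by (intro add_left_mono) 
    also have "\<dots> \<le> norm (Bb s) + sqrt c2 * (1 + (norm (fst p))\<^sup>2)"
    proof -
      have n1: "norm (fst (fst p)) \<le> 1 + (norm (fst p))\<^sup>2"
        using norm_fst_le[of "fst (fst p)" "snd (fst p)"] le_one_plus_sq[of "norm (fst p)"] by simp
      have "sqrt c2 * norm (fst (fst p)) \<le> sqrt c2 * (1 + (norm (fst p))\<^sup>2)"
        using n1 c2 by (intro mult_left_mono) auto
      then show ?thesis by simp
    qed
    also have "\<dots> \<le> A + sqrt c2 * ((norm (fst p))\<^sup>2 + (norm (snd p))\<^sup>2)"
      unfolding A_def using c2 by (simp add: algebra_simps)
    finally show ?thesis .
  qed
  have intF: "integrable (P s) ?F"
  proof (rule integrableI_bounded[OF FmP])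
    have "(\<integral>\<^sup>+p. ennreal (norm (?F p)) \<partial>P s) \<le> (\<integral>\<^sup>+p. ennreal A + ennreal (sqrt c2) * ennreal ((norm (fst p))\<^sup>2 + (norm (snd p))\<^sup>2) \<partial>P s)"
    proof (intro nn_integral_mono)
      fix p
      have "ennreal (norm (?F p)) \<le> ennreal (A + sqrt c2 * ((norm (fst p))\<^sup>2 + (norm (snd p))\<^sup>2))"
        by (rule ennreal_leI[OF bnd])
      also have "\<dots> = ennreal A + ennreal (sqrt c2) * ennreal ((norm (fst p))\<^sup>2 + (norm (snd p))\<^sup>2)"
      proof -
        have u0: "0 \<le> (norm (fst p))\<^sup>2 + (norm (snd p))\<^sup>2" by simp
        have s0: "0 \<le> sqrt c2" using c2 by simp
        show ?thesis by (simp only: ennreal_plus[OF A0 mult_nonneg_nonneg[OF s0 u0]] ennreal_mult[OF s0 u0])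
      qed
      finally show "ennreal (norm (?F p)) \<le> ennreal A + ennreal (sqrt c2) * ennreal ((norm (fst p))\<^sup>2 + (norm (snd p))\<^sup>2)" .
    qed
    also have "\<dots> = ennreal A + ennreal (sqrt c2) * (\<integral>\<^sup>+p. ennreal ((norm (fst p))\<^sup>2 + (norm (snd p))\<^sup>2) \<partial>P s)"
      using um by (subst nn_integral_add) (simp_all add: nn_integral_cmult Ps.emeasure_space_1)
    also have "\<dots> < \<infinity>" using G by (simp add: ennreal_mult_less_top less_top)
    finally show "(\<integral>\<^sup>+p. ennreal (norm (?F p)) \<partial>P s) < \<infinity>" .
  qed
  have "(LINT p|P s. Phi b \<sigma> \<nu> (\<phi> s) (return borel (Xbar s)) (snd p) \<nu> (fst p)) = (LINT p|P s. ?F p)"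
    unfolding Phi_eq[OF s] ..
  also have "\<dots> = (LINT p|(\<nu> \<bind> NN s). ?F p)" unfolding Pbind[OF s] ..
  also have "\<dots> = (LINT y|\<nu>. integral\<^sup>L (NN s y) ?F)"
    using intF unfolding Pbind[OF s] by (intro integral_bind_vec[OF NN_meas[OF s] Fm nu_ne])
  also have "\<dots> = (LINT y|\<nu>. \<Psi> s y (zz s y))"
  proof (rule integral_cong_AE)
    show "(\<lambda>y. integral\<^sup>L (NN s y) ?F) \<in> borel_measurable \<nu>"
      by (rule measurable_compose[OF NN_meas[OF s] integral_measurable_subprob_algebra[OF Fm]])
    have "(\<lambda>y. (s, y, zz s y)) \<in> measurable \<nu> (borel \<Otimes>\<^sub>M (borel \<Otimes>\<^sub>M borel))"
      using zm_K(3)[OF zz_meas s] measurable_ident_sets[OF nu_sets] by measurable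
    from measurable_compose[OF this Psi_meas]
    show "(\<lambda>y. \<Psi> s y (zz s y)) \<in> borel_measurable \<nu>" by simp
    have hm: "(\<lambda>y. \<integral>\<^sup>+h. ennreal ((norm h)\<^sup>2) \<partial>\<eta> y s) \<in> borel_measurable \<nu>"
      by (rule measurable_compose[OF \<eta>t(2)[OF s] nn_integral_measurable_subprob_algebra]) simp
    have g2: "(\<lambda>p::((real^'d1) \<times> (real^'d2)) \<times> (real^'m). ennreal ((norm (fst p))\<^sup>2)) \<in> borel_measurable (borel \<Otimes>\<^sub>M borel)"
      by measurable
    have "(\<integral>\<^sup>+y. (\<integral>\<^sup>+h. ennreal ((norm h)\<^sup>2) \<partial>\<eta> y s) \<partial>\<nu>) = (\<integral>\<^sup>+p. ennreal ((norm (fst p))\<^sup>2) \<partial>P s)"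
      using nnP[OF s g2] by simp
    also have "\<dots> \<le> (\<integral>\<^sup>+p. ennreal ((norm (fst p))\<^sup>2 + (norm (snd p))\<^sup>2) \<partial>P s)"
      by (intro nn_integral_mono) simp
    finally have "(\<integral>\<^sup>+y. (\<integral>\<^sup>+h. ennreal ((norm h)\<^sup>2) \<partial>\<eta> y s) \<partial>\<nu>) < \<infinity>" using G by simp
    then have ae: "AE y in \<nu>. (\<integral>\<^sup>+h. ennreal ((norm h)\<^sup>2) \<partial>\<eta> y s) \<noteq> \<infinity>"
      by (intro nn_integral_PInf_AE[OF hm]) simp
    show "AE y in \<nu>. integral\<^sup>L (NN s y) ?F = \<Psi> s y (zz s y)"
      using ae
    proof eventually_elim
      case (elim y)
      interpret e: prob_space "\<eta> y s" by (rule \<eta>ps)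
      have idm: "(\<lambda>h::(real^'d1) \<times> (real^'d2). h) \<in> borel_measurable (\<eta> y s)"
        using \<eta>sets by (simp cong: measurable_cong_sets)
      have inth: "integrable (\<eta> y s) (\<lambda>h. h)"
      proof (rule integrableI_bounded[OF idm])
        have "(\<integral>\<^sup>+h. ennreal (norm h) \<partial>\<eta> y s) \<le> (\<integral>\<^sup>+h. 1 + ennreal ((norm h)\<^sup>2) \<partial>\<eta> y s)"
        proof (intro nn_integral_mono)
          fix h :: "(real^'d1) \<times> (real^'d2)"
          have "ennreal (norm h) \<le> ennreal (1 + (norm h)\<^sup>2)" by (rule ennreal_leI[OF le_one_plus_sq])
          then show "ennreal (norm h) \<le> 1 + ennreal ((norm h)\<^sup>2)" by (simp add: ennreal_plus)
        qed
        also have "\<dots> = 1 + (\<integral>\<^sup>+h. ennreal ((norm h)\<^sup>2) \<partial>\<eta> y s)"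
          using idm by (subst nn_integral_add) (simp_all add: e.emeasure_space_1)
        also have "\<dots> < \<infinity>" using elim by (simp add: less_top)
        finally show "(\<integral>\<^sup>+h. ennreal (norm h) \<partial>\<eta> y s) < \<infinity>" .
      qed
      have "integral\<^sup>L (NN s y) ?F = (LINT h|\<eta> y s. ?F (h, y))"
        unfolding NN_def by (rule integral_distr[OF pairh Fm])
      also have "\<dots> = (LINT h|\<eta> y s. Bb s + Gf s y *v fst h)" by (simp add: \<Psi>_def)
      also have "\<dots> = (LINT h|\<eta> y s. Bb s) + (LINT h|\<eta> y s. Gf s y *v fst h)"
        by (rule Bochner_Integration.integral_add) (simp_all add: integrable_bounded_linear[OF bl_G inth])
      also have "\<dots> = Bb s + Gf s y *v fst (zz s y)"
        unfolding zz_def using integral_bounded_linear[OF bl_G inth, of "Gf s y"]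
        by (simp add: e.prob_space)
      finally show ?case by (simp add: \<Psi>_def)
    qed
  qed
  also have "\<dots> = (LINT y|\<nu>. Phi b \<sigma> \<nu> (\<phi> s) (return borel (Xbar s)) y \<nu> (zz s y))"
    unfolding Phi_eq[OF s] ..
  finally show ?thesis .
qed

end


context withP begin

lemma Pmeas: "P \<in> measurable (restrict_space borel K) (subprob_algebra (borel \<Otimes>\<^sub>M borel))"
  by (rule measurable_subprob_algebra)
     (auto simp: space_restrict_space Pps Psets Pm prob_space_imp_subprob_space)

lemma fstK: "(\<lambda>q::real \<times> 'z. fst q) \<in> measurable (restrict_space borel K \<Otimes>\<^sub>M M) borel"
proof -
  have "(\<lambda>x::real. x) \<in> measurable (restrict_space borel K) borel"
    by (rule measurable_restrict_space1[OF measurable_ident_sets[OF refl]])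
  from measurable_compose[OF measurable_fst[of "restrict_space borel K" M] this] show ?thesis by simp
qed

lemma innerP_meas:
  "(\<lambda>s. indicator K s *\<^sub>R (LINT p|P s. Phi b \<sigma> \<nu> (\<phi> s) (return borel (Xbar s)) (snd p) \<nu> (fst p)))
     \<in> borel_measurable borel"
proof -
  let ?M = "restrict_space borel K \<Otimes>\<^sub>M ((borel :: ((real^'d1) \<times> (real^'d2)) measure) \<Otimes>\<^sub>M (borel :: (real^'m) measure))"
  let ?Fq = "\<lambda>q::real \<times> (((real^'d1) \<times> (real^'d2)) \<times> (real^'m)). \<Psi> (fst q) (snd (snd q)) (fst (snd q))"
  have m3: "(\<lambda>q::real \<times> (((real^'d1) \<times> (real^'d2)) \<times> (real^'m)). (fst q, snd (snd q), fst (snd q))) \<in> measurable ?M (borel \<Otimes>\<^sub>M (borel \<Otimes>\<^sub>M borel))"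
    by (intro measurable_Pair fstK measurable_compose[OF measurable_snd measurable_snd]
        measurable_compose[OF measurable_snd measurable_fst])
  have Fq: "?Fq \<in> borel_measurable ?M"
    using measurable_compose[OF m3 Psi_meas] by simp
  have cp: "(\<lambda>(s, p). (s, p)) \<in> measurable ?M ?M"
    using measurable_ident_sets[OF refl, of ?M] by (simp add: case_prod_beta')
  have D: "(\<lambda>s. distr (P s) ?M (Pair s)) \<in> measurable (restrict_space borel K) (subprob_algebra ?M)"
    using measurable_distr2[OF cp Pmeas] by simp
  have I: "(\<lambda>s. integral\<^sup>L (distr (P s) ?M (Pair s)) ?Fq) \<in> borel_measurable (restrict_space borel K)"
    by (rule measurable_compose[OF D integral_measurable_subprob_algebra[OF Fq]])
  have eq: "integral\<^sup>L (distr (P s) ?M (Pair s)) ?Fq = (LINT p|P s. Phi b \<sigma> \<nu> (\<phi> s) (return borel (Xbar s)) (snd p) \<nu> (fst p))"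
    if s: "s \<in> K" for s
  proof -
    have "Pair s \<in> measurable (borel \<Otimes>\<^sub>M borel) ?M"
      by (rule measurable_Pair1') (use s in \<open>simp add: space_restrict_space\<close>)
    then have ps: "Pair s \<in> measurable (P s) ?M" using Psets[OF s] by (simp cong: measurable_cong_sets)
    show ?thesis unfolding integral_distr[OF ps Fq] Phi_eq[OF s] by simp
  qed
  have "(\<lambda>s. LINT p|P s. Phi b \<sigma> \<nu> (\<phi> s) (return borel (Xbar s)) (snd p) \<nu> (fst p)) \<in> borel_measurable (restrict_space borel K)"
    using I by (rule measurable_cong[THEN iffD1, rotated]) (simp add: eq space_restrict_space)
  then show ?thesis
    by (subst borel_measurable_restrict_space_iff[symmetric]) simp_all
qed

lemma innerZ_meas:
  "(\<lambda>s. indicator K s *\<^sub>R (LINT y|\<nu>. Phi b \<sigma> \<nu> (\<phi> s) (return borel (Xbar s)) y \<nu> (zz s y)))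
     \<in> borel_measurable borel"
proof -
  interpret nu: prob_space \<nu> by (rule nu_prob)
  have m3: "(\<lambda>q. (fst q, snd q, zz (fst q) (snd q))) \<in> measurable (restrict_space borel K \<Otimes>\<^sub>M \<nu>) (borel \<Otimes>\<^sub>M (borel \<Otimes>\<^sub>M borel))"
    by (intro measurable_Pair fstK measurable_compose[OF measurable_snd measurable_ident_sets[OF nu_sets]]
        zm_K(1)[OF zz_meas])
  have "(\<lambda>q. \<Psi> (fst q) (snd q) (zz (fst q) (snd q))) \<in> borel_measurable (restrict_space borel K \<Otimes>\<^sub>M \<nu>)"
    using measurable_compose[OF m3 Psi_meas] by simp
  then have "(\<lambda>s. LINT y|\<nu>. \<Psi> s y (zz s y)) \<in> borel_measurable (restrict_space borel K)"
    by (intro nu.borel_measurable_lebesgue_integral) (simp add: case_prod_beta')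
  then have "(\<lambda>s. LINT y|\<nu>. Phi b \<sigma> \<nu> (\<phi> s) (return borel (Xbar s)) y \<nu> (zz s y)) \<in> borel_measurable (restrict_space borel K)"
    by (rule measurable_cong[THEN iffD1, rotated]) (simp add: Phi_eq space_restrict_space)
  then show ?thesis
    by (subst borel_measurable_restrict_space_iff[symmetric]) simp_all
qed

lemma ae_good:
  assumes fin: "(\<integral>\<^sup>+ t\<in>K. (\<integral>\<^sup>+ p. ennreal ((norm (fst p))\<^sup>2 + (norm (snd p))\<^sup>2) \<partial>P t) \<partial>lborel) < \<infinity>"
  shows "AE s in lborel. s \<in> K \<longrightarrow> (\<integral>\<^sup>+ p. ennreal ((norm (fst p))\<^sup>2 + (norm (snd p))\<^sup>2) \<partial>P s) < \<infinity>"
proof -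
  define G where "G s = (\<integral>\<^sup>+ p. ennreal ((norm (fst p))\<^sup>2 + (norm (snd p))\<^sup>2) \<partial>P s)" for s
  have g: "(\<lambda>p::((real^'d1) \<times> (real^'d2)) \<times> (real^'m). ennreal ((norm (fst p))\<^sup>2 + (norm (snd p))\<^sup>2)) \<in> borel_measurable (borel \<Otimes>\<^sub>M borel)"
    by measurable
  have "G \<in> borel_measurable (restrict_space borel K)"
    unfolding G_def by (rule measurable_compose[OF Pmeas nn_integral_measurable_subprob_algebra[OF g]])
  then have "(\<lambda>s. G s * indicator K s) \<in> borel_measurable borel"
    by (subst borel_measurable_restrict_space_iff_ennreal[symmetric]) simp_all
  then have Gm: "(\<lambda>s. G s * indicator K s) \<in> borel_measurable lborel"
    by (simp cong: measurable_cong_sets)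
  have "AE s in lborel. G s * indicator K s \<noteq> \<infinity>"
    by (rule nn_integral_PInf_AE[OF Gm]) (use fin in \<open>simp add: G_def\<close>)
  then show ?thesis
  proof (rule eventually_mono)
    fix s assume "G s * indicator K s \<noteq> \<infinity>"
    then show "s \<in> K \<longrightarrow> (\<integral>\<^sup>+ p. ennreal ((norm (fst p))\<^sup>2 + (norm (snd p))\<^sup>2) \<partial>P s) < \<infinity>"
      by (auto simp: G_def less_top)
  qed
qed

lemma ode_eq:
  assumes fin: "(\<integral>\<^sup>+ t\<in>K. (\<integral>\<^sup>+ p. ennreal ((norm (fst p))\<^sup>2 + (norm (snd p))\<^sup>2) \<partial>P t) \<partial>lborel) < \<infinity>"
    and t: "t \<in> K"
  shows "(LINT s:{0..t}|lborel. (LINT p|P s. Phi b \<sigma> \<nu> (\<phi> s) (return borel (Xbar s)) (snd p) \<nu> (fst p)))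
       = (LINT s:{0..t}|lborel. (LINT y|\<nu>. Phi b \<sigma> \<nu> (\<phi> s) (return borel (Xbar s)) y \<nu> (zz s y)))"
proof -
  let ?fP = "\<lambda>s. LINT p|P s. Phi b \<sigma> \<nu> (\<phi> s) (return borel (Xbar s)) (snd p) \<nu> (fst p)"
  let ?fZ = "\<lambda>s. LINT y|\<nu>. Phi b \<sigma> \<nu> (\<phi> s) (return borel (Xbar s)) y \<nu> (zz s y)"
  have sub: "indicator {0..t} s = indicator {0..t} s * (indicator K s :: real)" for s
    using t by (auto simp: indicator_def)
  have mP: "(\<lambda>s. indicator {0..t} s *\<^sub>R ?fP s) \<in> borel_measurable lborel"
  proof -
    have "(\<lambda>s. indicator {0..t} s *\<^sub>R (indicator K s *\<^sub>R ?fP s)) \<in> borel_measurable borel"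
      by (intro borel_measurable_scaleR borel_measurable_indicator innerP_meas) simp
    then show ?thesis using sub by (simp cong: measurable_cong_sets)
  qed
  have mZ: "(\<lambda>s. indicator {0..t} s *\<^sub>R ?fZ s) \<in> borel_measurable lborel"
  proof -
    have "(\<lambda>s. indicator {0..t} s *\<^sub>R (indicator K s *\<^sub>R ?fZ s)) \<in> borel_measurable borel"
      by (intro borel_measurable_scaleR borel_measurable_indicator innerZ_meas) simp
    then show ?thesis using sub by (simp cong: measurable_cong_sets)
  qed
  show ?thesis
    unfolding set_lebesgue_integral_def
  proof (rule integral_cong_AE[OF mP mZ])
    show "AE s in lborel. indicator {0..t} s *\<^sub>R ?fP s = indicator {0..t} s *\<^sub>R ?fZ s"
      using ae_good[OF fin]
    proof (rule eventually_mono)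
      fix s assume H: "s \<in> K \<longrightarrow> (\<integral>\<^sup>+ p. ennreal ((norm (fst p))\<^sup>2 + (norm (snd p))\<^sup>2) \<partial>P s) < \<infinity>"
      show "indicator {0..t} s *\<^sub>R ?fP s = indicator {0..t} s *\<^sub>R ?fZ s"
      proof (cases "s \<in> {0..t}")
        case True
        then have s: "s \<in> K" using t by auto
        show ?thesis using key_pt[OF s] H s by simp
      qed simp
    qed
  qed
qed

end


context setting begin

lemma Pz:
  fixes x :: "real^'n" and P :: "real \<Rightarrow> (((real^'d1) \<times> (real^'d2)) \<times> (real^'m)) measure"
  assumes P: "P \<in> Xi b \<sigma> \<nu> x Xbar T \<phi>"
  shows "\<exists>z \<in> (Xi_tilde b \<sigma> \<nu> x Xbar T \<phi> :: (real \<Rightarrow> real^'m \<Rightarrow> (real^'d1) \<times> (real^'d2)) set).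
      (\<integral>\<^sup>+ t\<in>{0..T}. (\<integral>\<^sup>+ y. ennreal ((norm (z t y))\<^sup>2) \<partial>\<nu>) \<partial>lborel)
       \<le> (\<integral>\<^sup>+ t\<in>{0..T}. (\<integral>\<^sup>+ p. ennreal ((norm (fst p))\<^sup>2) \<partial>P t) \<partial>lborel)"
proof -
  have P1: "\<forall>t\<in>{0..T}. prob_space (P t) \<and> sets (P t) = sets (borel \<Otimes>\<^sub>M borel)"
    and P2m: "\<forall>A\<in>sets (borel \<Otimes>\<^sub>M borel). (\<lambda>t. emeasure (P t) A) \<in> borel_measurable (restrict_space borel {0..T})"
    and P3: "\<exists>\<eta>. stochastic_kernel T \<eta> \<and>
        (\<forall>t\<in>{0..T}. \<forall>A1\<in>sets borel. \<forall>A2\<in>sets borel.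
           emeasure (P t) (A1 \<times> A2) = (\<integral>\<^sup>+ y\<in>A2. emeasure (\<eta> y t) A1 \<partial>\<nu>))"
    and Pfin: "(\<integral>\<^sup>+ t\<in>{0..T}. (\<integral>\<^sup>+ p. ennreal ((norm (fst p))\<^sup>2 + (norm (snd p))\<^sup>2) \<partial>P t) \<partial>lborel) < \<infinity>"
    and Pode: "\<forall>t\<in>{0..T}. \<phi> t = x + (LINT s:{0..t}|lborel.
         (LINT p|P s. Phi b \<sigma> \<nu> (\<phi> s) (return borel (Xbar s)) (snd p) \<nu> (fst p)))"
    using P unfolding Xi_def by auto
  from P3 obtain \<eta> where sk: "stochastic_kernel T \<eta>"
    and rect: "\<forall>t\<in>{0..T}. \<forall>A1\<in>sets borel. \<forall>A2\<in>sets borel.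
           emeasure (P t) (A1 \<times> A2) = (\<integral>\<^sup>+ y\<in>A2. emeasure (\<eta> y t) A1 \<partial>\<nu>)" by blast
  interpret W: withP T b \<sigma> \<nu> Xbar \<phi> C c2 P \<eta>
  proof (intro withP.intro withP_axioms.intro setting_axioms)
    show "\<And>t. t \<in> {0..T} \<Longrightarrow> prob_space (P t)" using P1 by blast
    show "\<And>t. t \<in> {0..T} \<Longrightarrow> sets (P t) = sets (borel \<Otimes>\<^sub>M borel)" using P1 by blast
    show "\<And>A. A \<in> sets (borel \<Otimes>\<^sub>M borel) \<Longrightarrow> (\<lambda>t. emeasure (P t) A) \<in> borel_measurable (restrict_space borel {0..T})"
      using P2m by blast
    show "\<And>y t. prob_space (\<eta> y t)" "\<And>y t. sets (\<eta> y t) = sets borel"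
      using sk unfolding stochastic_kernel_def by auto
    show "\<And>A. A \<in> sets borel \<Longrightarrow> (\<lambda>(y, t). emeasure (\<eta> y t) A) \<in> borel_measurable (borel \<Otimes>\<^sub>M restrict_space borel {0..T})"
      using sk unfolding stochastic_kernel_def by auto
    show "\<And>t A1 A2. t \<in> {0..T} \<Longrightarrow> A1 \<in> sets borel \<Longrightarrow> A2 \<in> sets borel \<Longrightarrow>
           emeasure (P t) (A1 \<times> A2) = (\<integral>\<^sup>+ y\<in>A2. emeasure (\<eta> y t) A1 \<partial>\<nu>)"
      using rect by blast
  qed
  have "W.zz \<in> Xi_tilde b \<sigma> \<nu> x Xbar T \<phi>"
    unfolding Xi_tilde_def
  proof (intro CollectI conjI ballI)
    show "(\<lambda>(t, y). W.zz t y) \<in> borel_measurable (restrict_space borel {0..T} \<Otimes>\<^sub>M borel)"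
      by (rule W.zz_meas)
    show "(\<integral>\<^sup>+ t\<in>{0..T}. (\<integral>\<^sup>+ y. ennreal ((norm (W.zz t y))\<^sup>2 + (norm y)\<^sup>2) \<partial>\<nu>) \<partial>lborel) < \<infinity>"
      using W.moment_le Pfin by (rule le_less_trans)
    fix t assume t: "t \<in> {0..T}"
    show "\<phi> t = x + (LINT s:{0..t}|lborel. (LINT y|\<nu>. Phi b \<sigma> \<nu> (\<phi> s) (return borel (Xbar s)) y \<nu> (W.zz s y)))"
      using Pode t W.ode_eq[OF Pfin t] by simp
  qed
  with W.cost_le show ?thesis by blast
qed

end

lemma marg:
  fixes P :: "(((real^'d1) \<times> (real^'d2)) \<times> (real^'m)) measure" and \<nu> :: "(real^'m) measure"
    and \<eta> :: "real^'m \<Rightarrow> ((real^'d1) \<times> (real^'d2)) measure"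
  assumes Pp: "prob_space P" and Ps: "sets P = sets (borel \<Otimes>\<^sub>M borel)"
    and \<eta>p: "\<And>y. prob_space (\<eta> y)" and \<eta>s: "\<And>y. sets (\<eta> y) = sets borel"
    and \<nu>s: "sets \<nu> = sets borel"
    and rect: "\<And>A1 A2. A1 \<in> sets borel \<Longrightarrow> A2 \<in> sets borel \<Longrightarrow> emeasure P (A1 \<times> A2) = (\<integral>\<^sup>+ y\<in>A2. emeasure (\<eta> y) A1 \<partial>\<nu>)"
  shows "(\<integral>\<^sup>+ p. ennreal ((norm (snd p))\<^sup>2) \<partial>P) = (\<integral>\<^sup>+ y. ennreal ((norm y)\<^sup>2) \<partial>\<nu>)"
proof -
  have sm: "snd \<in> measurable P borel" using Ps by (simp cong: measurable_cong_sets)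
  have spP: "space P = UNIV" using sets_eq_imp_space_eq[OF Ps] by (simp add: space_pair_measure)
  have d: "distr P borel snd = \<nu>"
  proof (rule measure_eqI)
    show "sets (distr P borel snd) = sets \<nu>" using \<nu>s by simp
    fix A assume "A \<in> sets (distr P borel snd)"
    then have A: "A \<in> sets borel" by simp
    have "emeasure (distr P borel snd) A = emeasure P (snd -` A \<inter> space P)"
      by (rule emeasure_distr[OF sm A])
    also have "snd -` A \<inter> space P = UNIV \<times> A" using spP by auto
    also have "emeasure P (UNIV \<times> A) = (\<integral>\<^sup>+ y\<in>A. emeasure (\<eta> y) UNIV \<partial>\<nu>)"
      using A by (intro rect) simp_all
    also have "\<dots> = (\<integral>\<^sup>+ y. indicator A y \<partial>\<nu>)"
    proof (intro nn_integral_cong)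
      fix y
      have "emeasure (\<eta> y) UNIV = 1"
        using prob_space.emeasure_space_1[OF \<eta>p] sets_eq_imp_space_eq[OF \<eta>s] by simp
      then show "emeasure (\<eta> y) UNIV * indicator A y = indicator A y" by simp
    qed
    also have "\<dots> = emeasure \<nu> A" using A \<nu>s by (intro nn_integral_indicator) simp
    finally show "emeasure (distr P borel snd) A = emeasure \<nu> A" .
  qed
  have "(\<integral>\<^sup>+ y. ennreal ((norm y)\<^sup>2) \<partial>\<nu>) = (\<integral>\<^sup>+ y. ennreal ((norm y)\<^sup>2) \<partial>distr P borel snd)"
    using d by simp
  also have "\<dots> = (\<integral>\<^sup>+ p. ennreal ((norm (snd p))\<^sup>2) \<partial>P)"
    by (rule nn_integral_distr[OF sm]) simp
  finally show ?thesis by simp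
qed

lemma P2_of_fin:
  fixes \<nu> :: "(real^'m) measure" and T :: real
  assumes "prob_space \<nu>" "sets \<nu> = sets borel" "T > 0"
    and fin: "(\<integral>\<^sup>+ t\<in>{0..T}. F t \<partial>lborel) < \<infinity>"
    and le: "\<And>t. t \<in> {0..T} \<Longrightarrow> (\<integral>\<^sup>+ y. ennreal ((norm y)\<^sup>2) \<partial>\<nu>) \<le> F t"
  shows "P2 \<nu>"
proof -
  let ?c = "\<integral>\<^sup>+ y. ennreal ((norm y)\<^sup>2) \<partial>\<nu>"
  have "(\<integral>\<^sup>+ t. ?c * indicator {0..T} t \<partial>lborel) \<le> (\<integral>\<^sup>+ t\<in>{0..T}. F t \<partial>lborel)"
  proof (intro nn_integral_mono)
    fix t show "?c * indicator {0..T} t \<le> F t * indicator {0..T} t"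
      using le[of t] by (cases "t \<in> {0..T}") auto
  qed
  also have "(\<integral>\<^sup>+ t. ?c * indicator {0..T} t \<partial>lborel) = ?c * ennreal T"
    using assms(3) by (subst nn_integral_cmult_indicator) simp_all
  finally have "?c * ennreal T < \<infinity>" using fin by simp
  then have "?c < \<infinity>" using assms(3) by (auto simp add: ennreal_mult_less_top top.not_eq_extremum)
  then show ?thesis unfolding P2_def using assms by simp
qed


theorem lemma5p9:
  fixes T :: real and x :: "real^'n"
    and b :: "real^'n \<Rightarrow> (real^'n) measure \<Rightarrow> real^'m \<Rightarrow> (real^'m) measure \<Rightarrow> real^'n"
    and \<sigma> :: "real^'n \<Rightarrow> (real^'n) measure \<Rightarrow> real^'m \<Rightarrow> (real^'m) measure \<Rightarrow> real^'d1^'n"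
    and f :: "real^'m \<Rightarrow> real^'m" and g :: "real^'m \<Rightarrow> real^'d2^'m"
    and \<nu> :: "(real^'m) measure" and Xbar :: "real \<Rightarrow> real^'n"
    and \<phi> :: "real \<Rightarrow> real^'n"
  assumes T: "T > 0"
    and A1_b\<sigma>: "\<exists>C>0. \<forall>x1 x2 \<mu>1 \<mu>2 y1 y2 \<nu>1 \<nu>2. P2 \<mu>1 \<longrightarrow> P2 \<mu>2 \<longrightarrow> P2 \<nu>1 \<longrightarrow> P2 \<nu>2 \<longrightarrow>
        norm (b x1 \<mu>1 y1 \<nu>1 - b x2 \<mu>2 y2 \<nu>2) + norm (\<sigma> x1 \<mu>1 y1 \<nu>1 - \<sigma> x2 \<mu>2 y2 \<nu>2)
          \<le> C * (norm (x1 - x2) + norm (y1 - y2) + W2 \<mu>1 \<mu>2 + W2 \<nu>1 \<nu>2)"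
    and A1_fg: "\<exists>C>0. \<forall>y1 y2. norm (f y1 - f y2) + norm (g y1 - g y2) \<le> C * norm (y1 - y2)"
    and A1_diss: "\<exists>\<kappa>>0. \<forall>y1 y2. 2 * ((f y1 - f y2) \<bullet> (y1 - y2)) + 3 * (norm (g y1 - g y2))\<^sup>2
        \<le> - \<kappa> * (norm (y1 - y2))\<^sup>2"
    and A2_g: "bounded (range g)"
    and A2_\<sigma>: "\<exists>c1>0. \<exists>c2>0. \<forall>x \<mu> y \<nu>' \<xi>. P2 \<mu> \<longrightarrow> P2 \<nu>' \<longrightarrow>
        c1 * (norm \<xi>)\<^sup>2 \<le> ((\<sigma> x \<mu> y \<nu>' ** transpose (\<sigma> x \<mu> y \<nu>')) *v \<xi>) \<bullet> \<xi> \<and>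
        ((\<sigma> x \<mu> y \<nu>' ** transpose (\<sigma> x \<mu> y \<nu>')) *v \<xi>) \<bullet> \<xi> \<le> c2 * (norm \<xi>)\<^sup>2"
    and nu_inv: "invariant_measure f g \<nu>"
    and nu_unique: "\<forall>\<nu>'. invariant_measure f g \<nu>' \<longrightarrow> \<nu>' = \<nu>"
    and Xbar0: "Xbar 0 = x"
    and Xbar_ode: "\<forall>t\<in>{0..T}. (Xbar has_vector_derivative
        bbar b \<nu> (Xbar t) (return borel (Xbar t))) (at t within {0..T})"
    and \<phi>_cont: "continuous_on {0..T} \<phi>"
  shows "I_rate TYPE('d2) b \<sigma> \<nu> x Xbar T \<phi> = I_tilde TYPE('d2) b \<sigma> \<nu> x Xbar T \<phi>"
proof -
  have nps: "prob_space \<nu>" and nsets: "sets \<nu> = sets borel"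
    using nu_inv unfolding invariant_measure_def by auto
  show ?thesis
  proof (cases "P2 \<nu>")
    case True
    from A1_b\<sigma> obtain C where C: "C > 0" and HC: "\<forall>x1 x2 \<mu>1 \<mu>2 y1 y2 \<nu>1 \<nu>2. P2 \<mu>1 \<longrightarrow> P2 \<mu>2 \<longrightarrow> P2 \<nu>1 \<longrightarrow> P2 \<nu>2 \<longrightarrow>
        norm (b x1 \<mu>1 y1 \<nu>1 - b x2 \<mu>2 y2 \<nu>2) + norm (\<sigma> x1 \<mu>1 y1 \<nu>1 - \<sigma> x2 \<mu>2 y2 \<nu>2)
          \<le> C * (norm (x1 - x2) + norm (y1 - y2) + W2 \<mu>1 \<mu>2 + W2 \<nu>1 \<nu>2)" by blast
    from A2_\<sigma> obtain c1 c2 where c2: "c2 > 0" and Hc: "\<forall>x \<mu> y \<nu>' \<xi>. P2 \<mu> \<longrightarrow> P2 \<nu>' \<longrightarrow>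
        c1 * (norm \<xi>)\<^sup>2 \<le> ((\<sigma> x \<mu> y \<nu>' ** transpose (\<sigma> x \<mu> y \<nu>')) *v \<xi>) \<bullet> \<xi> \<and>
        ((\<sigma> x \<mu> y \<nu>' ** transpose (\<sigma> x \<mu> y \<nu>')) *v \<xi>) \<bullet> \<xi> \<le> c2 * (norm \<xi>)\<^sup>2" by blast
    have Xc: "continuous_on {0..T} Xbar"
    proof -
      have "continuous (at t within {0..T}) Xbar" if "t \<in> {0..T}" for t
        using Xbar_ode that unfolding has_vector_derivative_def by (blast intro: has_derivative_continuous)
      then show ?thesis using continuous_on_eq_continuous_within by blast
    qed
    interpret S: setting T b \<sigma> \<nu> Xbar \<phi> C c2
    proof (unfold_locales)
      show "0 < T" by (rule T)
      show "0 < C" by (rule C)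
      show "0 < c2" by (rule c2)
      fix x1 x2 :: "real^'n" and \<mu>1 \<mu>2 :: "(real^'n) measure" and y1 y2 :: "real^'m" assume m: "P2 \<mu>1" "P2 \<mu>2"
      have H: "norm (b x1 \<mu>1 y1 \<nu> - b x2 \<mu>2 y2 \<nu>) + norm (\<sigma> x1 \<mu>1 y1 \<nu> - \<sigma> x2 \<mu>2 y2 \<nu>)
          \<le> C * (norm (x1 - x2) + norm (y1 - y2) + W2 \<mu>1 \<mu>2 + W2 \<nu> \<nu>)"
        using HC m True by blast
      show "norm (b x1 \<mu>1 y1 \<nu> - b x2 \<mu>2 y2 \<nu>) \<le> C * (norm (x1 - x2) + norm (y1 - y2) + W2 \<mu>1 \<mu>2 + W2 \<nu> \<nu>)"
        using H norm_ge_zero[of "\<sigma> x1 \<mu>1 y1 \<nu> - \<sigma> x2 \<mu>2 y2 \<nu>"] by linarith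
      show "norm (\<sigma> x1 \<mu>1 y1 \<nu> - \<sigma> x2 \<mu>2 y2 \<nu>) \<le> C * (norm (x1 - x2) + norm (y1 - y2) + W2 \<mu>1 \<mu>2 + W2 \<nu> \<nu>)"
        using H norm_ge_zero[of "b x1 \<mu>1 y1 \<nu> - b x2 \<mu>2 y2 \<nu>"] by linarith
    next
      fix x :: "real^'n" and \<mu> :: "(real^'n) measure" and y :: "real^'m" and \<xi> :: "real^'n" assume "P2 \<mu>"
      then show "((\<sigma> x \<mu> y \<nu> ** transpose (\<sigma> x \<mu> y \<nu>)) *v \<xi>) \<bullet> \<xi> \<le> c2 * (norm \<xi>)\<^sup>2"
        using Hc True by blast
    next
      show "P2 \<nu>" by (rule True)
      show "continuous_on {0..T} Xbar" by (rule Xc)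
      show "continuous_on {0..T} \<phi>" by (rule \<phi>_cont)
    qed
    show ?thesis
      unfolding I_rate_def I_tilde_def
    proof (rule antisym)
      show "Inf {ennreal (1/2) * (\<integral>\<^sup>+ t\<in>{0..T}. (\<integral>\<^sup>+ p. ennreal ((norm (fst p))\<^sup>2) \<partial>P t) \<partial>lborel) | P.
            P \<in> (Xi b \<sigma> \<nu> x Xbar T \<phi> :: (real \<Rightarrow> (((real^'d1) \<times> (real^'d2)) \<times> (real^'m)) measure) set)}
         \<le> Inf {ennreal (1/2) * (\<integral>\<^sup>+ t\<in>{0..T}. (\<integral>\<^sup>+ y. ennreal ((norm (z t y))\<^sup>2) \<partial>\<nu>) \<partial>lborel) | z.
            z \<in> (Xi_tilde b \<sigma> \<nu> x Xbar T \<phi> :: (real \<Rightarrow> real^'m \<Rightarrow> (real^'d1) \<times> (real^'d2)) set)}"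
      proof (rule Inf_greatest)
        fix v assume "v \<in> {ennreal (1/2) * (\<integral>\<^sup>+ t\<in>{0..T}. (\<integral>\<^sup>+ y. ennreal ((norm (z t y))\<^sup>2) \<partial>\<nu>) \<partial>lborel) | z.
            z \<in> (Xi_tilde b \<sigma> \<nu> x Xbar T \<phi> :: (real \<Rightarrow> real^'m \<Rightarrow> (real^'d1) \<times> (real^'d2)) set)}"
        then obtain z :: "real \<Rightarrow> real^'m \<Rightarrow> (real^'d1) \<times> (real^'d2)" where z: "z \<in> Xi_tilde b \<sigma> \<nu> x Xbar T \<phi>"
          and v: "v = ennreal (1/2) * (\<integral>\<^sup>+ t\<in>{0..T}. (\<integral>\<^sup>+ y. ennreal ((norm (z t y))\<^sup>2) \<partial>\<nu>) \<partial>lborel)" by blast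
        from S.zP[OF z] obtain P :: "real \<Rightarrow> (((real^'d1) \<times> (real^'d2)) \<times> (real^'m)) measure"
          where P: "P \<in> Xi b \<sigma> \<nu> x Xbar T \<phi>"
          and eq: "(\<integral>\<^sup>+ t\<in>{0..T}. (\<integral>\<^sup>+ p. ennreal ((norm (fst p))\<^sup>2) \<partial>P t) \<partial>lborel)
              = (\<integral>\<^sup>+ t\<in>{0..T}. (\<integral>\<^sup>+ y. ennreal ((norm (z t y))\<^sup>2) \<partial>\<nu>) \<partial>lborel)" by blast
        show "Inf {ennreal (1/2) * (\<integral>\<^sup>+ t\<in>{0..T}. (\<integral>\<^sup>+ p. ennreal ((norm (fst p))\<^sup>2) \<partial>P t) \<partial>lborel) | P.
            P \<in> (Xi b \<sigma> \<nu> x Xbar T \<phi> :: (real \<Rightarrow> (((real^'d1) \<times> (real^'d2)) \<times> (real^'m)) measure) set)} \<le> v"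
          by (rule Inf_lower) (use P eq v in \<open>intro CollectI exI[of _ P], simp\<close>)
      qed
    next
      show "Inf {ennreal (1/2) * (\<integral>\<^sup>+ t\<in>{0..T}. (\<integral>\<^sup>+ y. ennreal ((norm (z t y))\<^sup>2) \<partial>\<nu>) \<partial>lborel) | z.
            z \<in> (Xi_tilde b \<sigma> \<nu> x Xbar T \<phi> :: (real \<Rightarrow> real^'m \<Rightarrow> (real^'d1) \<times> (real^'d2)) set)}
         \<le> Inf {ennreal (1/2) * (\<integral>\<^sup>+ t\<in>{0..T}. (\<integral>\<^sup>+ p. ennreal ((norm (fst p))\<^sup>2) \<partial>P t) \<partial>lborel) | P.
            P \<in> (Xi b \<sigma> \<nu> x Xbar T \<phi> :: (real \<Rightarrow> (((real^'d1) \<times> (real^'d2)) \<times> (real^'m)) measure) set)}"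
      proof (rule Inf_greatest)
        fix v assume "v \<in> {ennreal (1/2) * (\<integral>\<^sup>+ t\<in>{0..T}. (\<integral>\<^sup>+ p. ennreal ((norm (fst p))\<^sup>2) \<partial>P t) \<partial>lborel) | P.
            P \<in> (Xi b \<sigma> \<nu> x Xbar T \<phi> :: (real \<Rightarrow> (((real^'d1) \<times> (real^'d2)) \<times> (real^'m)) measure) set)}"
        then obtain P :: "real \<Rightarrow> (((real^'d1) \<times> (real^'d2)) \<times> (real^'m)) measure" where P: "P \<in> Xi b \<sigma> \<nu> x Xbar T \<phi>"
          and v: "v = ennreal (1/2) * (\<integral>\<^sup>+ t\<in>{0..T}. (\<integral>\<^sup>+ p. ennreal ((norm (fst p))\<^sup>2) \<partial>P t) \<partial>lborel)" by blast
        from S.Pz[OF P] obtain z :: "real \<Rightarrow> real^'m \<Rightarrow> (real^'d1) \<times> (real^'d2)"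
          where z: "z \<in> Xi_tilde b \<sigma> \<nu> x Xbar T \<phi>"
          and le: "(\<integral>\<^sup>+ t\<in>{0..T}. (\<integral>\<^sup>+ y. ennreal ((norm (z t y))\<^sup>2) \<partial>\<nu>) \<partial>lborel)
              \<le> (\<integral>\<^sup>+ t\<in>{0..T}. (\<integral>\<^sup>+ p. ennreal ((norm (fst p))\<^sup>2) \<partial>P t) \<partial>lborel)" by blast
        have "Inf {ennreal (1/2) * (\<integral>\<^sup>+ t\<in>{0..T}. (\<integral>\<^sup>+ y. ennreal ((norm (z t y))\<^sup>2) \<partial>\<nu>) \<partial>lborel) | z.
            z \<in> (Xi_tilde b \<sigma> \<nu> x Xbar T \<phi> :: (real \<Rightarrow> real^'m \<Rightarrow> (real^'d1) \<times> (real^'d2)) set)}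
          \<le> ennreal (1/2) * (\<integral>\<^sup>+ t\<in>{0..T}. (\<integral>\<^sup>+ y. ennreal ((norm (z t y))\<^sup>2) \<partial>\<nu>) \<partial>lborel)"
          by (rule Inf_lower) (use z in blast)
        also have "\<dots> \<le> v" unfolding v by (rule mult_left_mono[OF le]) simp
        finally show "Inf {ennreal (1/2) * (\<integral>\<^sup>+ t\<in>{0..T}. (\<integral>\<^sup>+ y. ennreal ((norm (z t y))\<^sup>2) \<partial>\<nu>) \<partial>lborel) | z.
            z \<in> (Xi_tilde b \<sigma> \<nu> x Xbar T \<phi> :: (real \<Rightarrow> real^'m \<Rightarrow> (real^'d1) \<times> (real^'d2)) set)} \<le> v" .
      qed
    qed
  next
    case False
    have e1: "(Xi b \<sigma> \<nu> x Xbar T \<phi> :: (real \<Rightarrow> (((real^'d1) \<times> (real^'d2)) \<times> (real^'m)) measure) set) = {}"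
    proof (rule ccontr)
      assume "(Xi b \<sigma> \<nu> x Xbar T \<phi> :: (real \<Rightarrow> (((real^'d1) \<times> (real^'d2)) \<times> (real^'m)) measure) set) \<noteq> {}"
      then obtain P :: "real \<Rightarrow> (((real^'d1) \<times> (real^'d2)) \<times> (real^'m)) measure"
        where P: "P \<in> Xi b \<sigma> \<nu> x Xbar T \<phi>" by blast
      have P1: "\<forall>t\<in>{0..T}. prob_space (P t) \<and> sets (P t) = sets (borel \<Otimes>\<^sub>M borel)"
        and P3: "\<exists>\<eta>. stochastic_kernel T \<eta> \<and>
          (\<forall>t\<in>{0..T}. \<forall>A1\<in>sets borel. \<forall>A2\<in>sets borel.
             emeasure (P t) (A1 \<times> A2) = (\<integral>\<^sup>+ y\<in>A2. emeasure (\<eta> y t) A1 \<partial>\<nu>))"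
        and Pfin: "(\<integral>\<^sup>+ t\<in>{0..T}. (\<integral>\<^sup>+ p. ennreal ((norm (fst p))\<^sup>2 + (norm (snd p))\<^sup>2) \<partial>P t) \<partial>lborel) < \<infinity>"
        using P unfolding Xi_def by auto
      from P3 obtain \<eta> where sk: "stochastic_kernel T \<eta>"
        and rect: "\<forall>t\<in>{0..T}. \<forall>A1\<in>sets borel. \<forall>A2\<in>sets borel.
             emeasure (P t) (A1 \<times> A2) = (\<integral>\<^sup>+ y\<in>A2. emeasure (\<eta> y t) A1 \<partial>\<nu>)" by blast
      have "P2 \<nu>"
      proof (rule P2_of_fin[OF nps nsets T Pfin])
        fix t assume t: "t \<in> {0..T}"
        have "(\<integral>\<^sup>+ y. ennreal ((norm y)\<^sup>2) \<partial>\<nu>) = (\<integral>\<^sup>+ p. ennreal ((norm (snd p))\<^sup>2) \<partial>P t)"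
        proof (rule marg[symmetric])
          show "prob_space (P t)" "sets (P t) = sets (borel \<Otimes>\<^sub>M borel)" using P1 t by auto
          show "\<And>y. prob_space (\<eta> y t)" "\<And>y. sets (\<eta> y t) = sets borel"
            using sk unfolding stochastic_kernel_def by auto
          show "sets \<nu> = sets borel" by (rule nsets)
          show "\<And>A1 A2. A1 \<in> sets borel \<Longrightarrow> A2 \<in> sets borel \<Longrightarrow> emeasure (P t) (A1 \<times> A2) = (\<integral>\<^sup>+ y\<in>A2. emeasure (\<eta> y t) A1 \<partial>\<nu>)"
            using rect t by blast
        qed
        also have "\<dots> \<le> (\<integral>\<^sup>+ p. ennreal ((norm (fst p))\<^sup>2 + (norm (snd p))\<^sup>2) \<partial>P t)"
          by (intro nn_integral_mono) simp
        finally show "(\<integral>\<^sup>+ y. ennreal ((norm y)\<^sup>2) \<partial>\<nu>) \<le> (\<integral>\<^sup>+ p. ennreal ((norm (fst p))\<^sup>2 + (norm (snd p))\<^sup>2) \<partial>P t)" .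
      qed
      with False show False by blast
    qed
    have e2: "(Xi_tilde b \<sigma> \<nu> x Xbar T \<phi> :: (real \<Rightarrow> real^'m \<Rightarrow> (real^'d1) \<times> (real^'d2)) set) = {}"
    proof (rule ccontr)
      assume "(Xi_tilde b \<sigma> \<nu> x Xbar T \<phi> :: (real \<Rightarrow> real^'m \<Rightarrow> (real^'d1) \<times> (real^'d2)) set) \<noteq> {}"
      then obtain z :: "real \<Rightarrow> real^'m \<Rightarrow> (real^'d1) \<times> (real^'d2)"
        where z: "z \<in> Xi_tilde b \<sigma> \<nu> x Xbar T \<phi>" by blast
      have zfin: "(\<integral>\<^sup>+ t\<in>{0..T}. (\<integral>\<^sup>+ y. ennreal ((norm (z t y))\<^sup>2 + (norm y)\<^sup>2) \<partial>\<nu>) \<partial>lborel) < \<infinity>"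
        using z unfolding Xi_tilde_def by auto
      have "P2 \<nu>"
      proof (rule P2_of_fin[OF nps nsets T zfin])
        fix t assume t: "t \<in> {0..T}"
        show "(\<integral>\<^sup>+ y. ennreal ((norm y)\<^sup>2) \<partial>\<nu>) \<le> (\<integral>\<^sup>+ y. ennreal ((norm (z t y))\<^sup>2 + (norm y)\<^sup>2) \<partial>\<nu>)"
          by (intro nn_integral_mono) simp
      qed
      with False show False by blast
    qed
    show ?thesis unfolding I_rate_def I_tilde_def using e1 e2 by simp
  qed
qed


end
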